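(* Let $w(q)>0$ be any function with $w(q)\to0$ as $q\to\infty$. For each $q\ge3$ there exists a subset $\mathcal F_q$ of the set of Dirichlet characters modulo $q$, with the property that $\chi\in\mathcal F_q$ if and only if $\overline\chi\in\mathcal F_q$, of cardinality $$\#\mathcal F_q\ge\phi(q)\big(1-O(w(q)^2)\big),$$ such that $\log q_\chi=\log q+O\big(w(q)^{-1}\log\log q\big)$ for each $\chi\in\mathcal F_q$ (with absolute implied constants).
   Context: $q_\chi$ denotes the conductor of the Dirichlet character $\chi$. *)

theory Defs
  imports "HOL-Analysis.Analysis" "HOL-Number_Theory.Number_Theory"
begin

definition dirichlet_char :: "nat \<Rightarrow> (nat \<Rightarrow> complex) \<Rightarrow> bool" where
  "dirichlet_char q c \<longleftrightarrow>
     q > 0 \<and> c 1 = 1 \<and>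
     (\<forall>n. c (n + q) = c n) \<and>
     (\<forall>m n. c (m * n) = c m * c n) \<and>
     (\<forall>n. c n \<noteq> 0 \<longleftrightarrow> coprime n q)"

definition dirichlet_chars :: "nat \<Rightarrow> (nat \<Rightarrow> complex) set" where
  "dirichlet_chars q = {c. dirichlet_char q c}"

definition conductor :: "nat \<Rightarrow> (nat \<Rightarrow> complex) \<Rightarrow> nat" where
  "conductor q c = (LEAST d. d > 0 \<and> d dvd q \<and>
      (\<forall>n. coprime n q \<and> [n = 1] (mod d) \<longrightarrow> c n = 1))"

end

theory Submission
  imports Defs
begin

definition ischar :: "('a, 'b) monoid_scheme \<Rightarrow> 'a set \<Rightarrow> ('a \<Rightarrow> complex) \<Rightarrow> bool" where
  "ischar G S f \<longleftrightarrow> (\<forall>x\<in>S. \<forall>y\<in>S. f (x \<otimes>\<^bsub>G\<^esub> y) = f x * f y) \<and> f \<one>\<^bsub>G\<^esub> = 1 \<and> (\<forall>x. x \<notin> S \<longrightarrow> f x = 0)"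

definition extset :: "('a, 'b) monoid_scheme \<Rightarrow> 'a set \<Rightarrow> ('a \<Rightarrow> complex) \<Rightarrow> 'a set \<Rightarrow> ('a \<Rightarrow> complex) set" where
  "extset G H \<psi> S = {f. ischar G S f \<and> (\<forall>x\<in>H. f x = \<psi> x)}"

context comm_group
begin

lemma subgroup_pow_closed:
  assumes "subgroup S G" "x \<in> S" shows "x [^] (n::nat) \<in> S"
proof (induction n)
  case 0 then show ?case using assms subgroup.one_closed by simp
next
  case (Suc n) then show ?case using assms subgroup.m_closed by simp
qed

lemma inv_cancel_aux: "x \<in> carrier G \<Longrightarrow> y \<in> carrier G \<Longrightarrow> inv x \<otimes> (y \<otimes> x) = y"
  by (simp add: m_comm[of y x] m_assoc[symmetric])

lemma ischar_nonzero:
  assumes "subgroup S G" "ischar G S f" "x \<in> S" shows "f x \<noteq> 0"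
proof
  assume "f x = 0"
  have "inv x \<in> S" using subgroup.m_inv_closed[OF assms(1,3)] .
  hence "f (x \<otimes> inv x) = f x * f (inv x)" using assms(2,3) unfolding ischar_def by simp
  moreover have "x \<otimes> inv x = \<one>" using subgroup.mem_carrier[OF assms(1,3)] by simp
  ultimately show False using assms(2) \<open>f x = 0\<close> unfolding ischar_def by simp
qed

lemma ischar_pow:
  assumes "subgroup S G" "ischar G S f" "x \<in> S" shows "f (x [^] (n::nat)) = f x ^ n"
proof (induction n)
  case 0 then show ?case using assms(2) by (simp add: ischar_def)
next
  case (Suc n)
  have "x [^] n \<in> S" using subgroup_pow_closed[OF assms(1,3)] .
  then show ?case using Suc assms unfolding ischar_def by simp
qed

lemma ext_step:
  assumes fin: "finite (carrier G)" and H: "subgroup H G" and g: "g \<in> carrier G" "g \<notin> H"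
    and psi: "ischar G H \<psi>"
  obtains H' m where "subgroup H' G" "H \<subset> H'" "card H' = m * card H"
    "finite (extset G H \<psi> H')" "card (extset G H \<psi> H') = m"
proof -
  have Hc: "H \<subseteq> carrier G" using subgroup.subset[OF H] .
  define m where "m = (LEAST k::nat. 0 < k \<and> g [^] k \<in> H)"
  have ex: "\<exists>k::nat. 0 < k \<and> g [^] k \<in> H"
    by (rule exI[of _ "order G"]) (use pow_order_eq_1[OF g(1)] fin order_gt_0_iff_finite subgroup.one_closed[OF H] in auto)
  have m: "0 < m" "g [^] m \<in> H" using LeastI_ex[OF ex] unfolding m_def by auto
  have mmin: "\<And>k. 0 < k \<Longrightarrow> k < m \<Longrightarrow> g [^] k \<notin> H" using not_less_Least unfolding m_def by blast
  have g1: "g [^] (1::nat) = g" using g by simp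
  have "m \<noteq> 1" using m(2) g(2) g1 by auto
  hence m1: "1 < m" using m(1) by linarith
  have uniq0: "h = h' \<and> i = j" if "h\<in>H" "h'\<in>H" "i\<le>j" "j<m" "h \<otimes> g[^]i = h' \<otimes> g[^]j" for h h' i j
  proof -
    have hc: "h \<in> carrier G" "h' \<in> carrier G" using that Hc by auto
    have "g[^]j = g[^]i \<otimes> g[^](j-i)" using g that(3) by (simp add: nat_pow_mult)
    hence "h \<otimes> g[^]i = (h' \<otimes> g[^](j-i)) \<otimes> g[^]i" using that(5) hc g by (simp add: m_ac)
    hence e: "h = h' \<otimes> g[^](j-i)" using hc g by (metis m_closed nat_pow_closed right_cancel)
    hence "g[^](j-i) = inv h' \<otimes> h" using hc g by (simp add: m_assoc[symmetric])
    hence "g[^](j-i) \<in> H" using subgroup.m_closed[OF H subgroup.m_inv_closed[OF H that(2)] that(1)] by simp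
    hence "j - i = 0" using mmin[of "j-i"] that by linarith
    thus ?thesis using e hc that by simp
  qed
  have uniq: "h = h' \<and> i = j" if "h\<in>H" "h'\<in>H" "i<m" "j<m" "h \<otimes> g[^]i = h' \<otimes> g[^]j" for h h' i j
    using uniq0[of h h' i j] uniq0[of h' h j i] that by (cases "i \<le> j") auto
  have repr: "\<exists>h'\<in>H. h \<otimes> g[^]n = h' \<otimes> g[^](n mod m) \<and> h' = h \<otimes> (g[^]m)[^](n div m)"
    if "h \<in> H" for h and n::nat
  proof -
    have "g[^]n = g[^](m * (n div m)) \<otimes> g[^](n mod m)" using g by (simp add: nat_pow_mult)
    also have "g[^](m * (n div m)) = (g[^]m)[^](n div m)" using g by (simp add: nat_pow_pow)
    finally have "h \<otimes> g[^]n = (h \<otimes> (g[^]m)[^](n div m)) \<otimes> g[^](n mod m)"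
      using that Hc g by (simp add: m_assoc subset_iff)
    moreover have "h \<otimes> (g[^]m)[^](n div m) \<in> H"
      using that subgroup_pow_closed[OF H m(2)] by (intro subgroup.m_closed[OF H])
    ultimately show ?thesis by blast
  qed
  define H' where "H' = (\<lambda>(h,i). h \<otimes> g [^] i) ` (H \<times> {..<m})"
  have inH': "h \<otimes> g[^]n \<in> H'" if hH: "h \<in> H" for h and n::nat
  proof -
    obtain h' where "h' \<in> H" "h \<otimes> g[^]n = h' \<otimes> g[^](n mod m)" using repr[OF hH, of n] by blast
    moreover have "(h', n mod m) \<in> H \<times> {..<m}" using \<open>h' \<in> H\<close> m by simp
    moreover have "h' \<otimes> g[^](n mod m) = (\<lambda>(h,i). h \<otimes> g [^] i) (h', n mod m)" by simp
    ultimately show ?thesis unfolding H'_def by (metis image_eqI)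
  qed
  have H'sub: "subgroup H' G"
  proof (rule subgroupI)
    show "H' \<subseteq> carrier G" unfolding H'_def using Hc g by auto
    show "H' \<noteq> {}" unfolding H'_def using m subgroup.one_closed[OF H] by auto
  next
    fix a assume "a \<in> H'"
    then obtain h and i::nat where hi: "h \<in> H" "a = h \<otimes> g[^]i" unfolding H'_def by auto
    have hc: "h \<in> carrier G" using hi Hc by auto
    have "inv a = (inv h \<otimes> inv ((g[^]m)[^]i)) \<otimes> g[^](m*i - i)"
    proof -
      have e1: "(g[^]m)[^]i = g[^](m*i - i) \<otimes> g[^]i" using g m by (simp add: nat_pow_pow nat_pow_mult)
      have e2: "inv ((g[^]m)[^]i) \<otimes> g[^](m*i - i) = inv (g[^]i)"
        unfolding e1 using g by (simp add: inv_mult m_assoc inv_cancel_aux)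
      have "inv a = inv h \<otimes> inv (g[^]i)" using hi hc g by (simp add: inv_mult)
      also have "\<dots> = (inv h \<otimes> inv ((g[^]m)[^]i)) \<otimes> g[^](m*i - i)"
        using hc g by (simp add: e2 m_assoc)
      finally show ?thesis .
    qed
    moreover have "inv h \<otimes> inv ((g[^]m)[^]i) \<in> H"
      using hi subgroup_pow_closed[OF H m(2)] by (intro subgroup.m_closed[OF H] subgroup.m_inv_closed[OF H])
    ultimately show "inv a \<in> H'" using inH' by simp
  next
    fix a b assume "a \<in> H'" "b \<in> H'"
    then obtain h h' and i j :: nat where hi: "h \<in> H" "a = h \<otimes> g[^]i" "h' \<in> H" "b = h' \<otimes> g[^]j"
      unfolding H'_def by auto
    have hc: "h \<in> carrier G" "h' \<in> carrier G" using hi Hc by auto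
    have "a \<otimes> b = (h \<otimes> h') \<otimes> (g[^]i \<otimes> g[^]j)" using hi hc g by (simp add: m_ac)
    also have "g[^]i \<otimes> g[^]j = g[^](i+j)" using g by (simp add: nat_pow_mult)
    finally have "a \<otimes> b = (h \<otimes> h') \<otimes> g[^](i+j)" .
    thus "a \<otimes> b \<in> H'" using inH' hi subgroup.m_closed[OF H] by simp
  qed
  have cardH': "card H' = m * card H"
  proof -
    have "inj_on (\<lambda>(h,i). h \<otimes> g [^] i) (H \<times> {..<m})"
      using uniq by (intro inj_onI) auto
    hence "card H' = card (H \<times> {..<m})" unfolding H'_def by (rule card_image)
    thus ?thesis by (simp add: card_cartesian_product)
  qed
  have HH': "H \<subset> H'"
  proof
    show "H \<subseteq> H'"
    proof
      fix h assume "h \<in> H"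
      hence "h \<otimes> g[^](0::nat) \<in> H'" by (rule inH')
      thus "h \<in> H'" using \<open>h \<in> H\<close> Hc by auto
    qed
    have "\<one> \<otimes> g[^](1::nat) \<in> H'" using subgroup.one_closed[OF H] by (rule inH')
    hence "g \<in> H'" using g by simp
    thus "H \<noteq> H'" using g by auto
  qed
  have psi1: "\<psi> \<one> = 1" and psim: "\<And>x y. x \<in> H \<Longrightarrow> y \<in> H \<Longrightarrow> \<psi> (x \<otimes> y) = \<psi> x * \<psi> y"
    using psi unfolding ischar_def by auto
  define c where "c = \<psi> (g[^]m)"
  have c0: "c \<noteq> 0" unfolding c_def using ischar_nonzero[OF H psi m(2)] .
  define chi where "chi = (\<lambda>z x. if x \<in> H' then (THE v. \<exists>h\<in>H. \<exists>i<m. x = h \<otimes> g[^]i \<and> v = \<psi> h * z^i) else 0)"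
  have chi_eq: "chi z (h \<otimes> g[^]i) = \<psi> h * z^i" if "h \<in> H" "i < m" for z h i
  proof -
    have "h \<otimes> g[^]i \<in> H'" using that inH' by blast
    moreover have "(THE v. \<exists>h'\<in>H. \<exists>i'<m. h \<otimes> g[^]i = h' \<otimes> g[^]i' \<and> v = \<psi> h' * z^i') = \<psi> h * z^i"
      using that uniq by (intro the_equality) blast+
    ultimately show ?thesis unfolding chi_def by simp
  qed
  have chi_gen: "chi z (h \<otimes> g[^]n) = \<psi> h * z^n" if tt: "h \<in> H" "z^m = c" for z h and n::nat
  proof -
    obtain h' where h': "h' \<in> H" "h \<otimes> g[^]n = h' \<otimes> g[^](n mod m)" "h' = h \<otimes> (g[^]m)[^](n div m)"
      using repr[OF tt(1), of n] by blast
    have "chi z (h \<otimes> g[^]n) = \<psi> h' * z^(n mod m)" using h' m chi_eq by simp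
    also have "\<psi> h' = \<psi> h * c^(n div m)"
      using h'(3) psim[OF tt(1) subgroup_pow_closed[OF H m(2)]] ischar_pow[OF H psi m(2)] c_def by simp
    also have "\<psi> h * c^(n div m) * z^(n mod m) = \<psi> h * z^n"
    proof -
      have "z^n = z^(m*(n div m) + n mod m)" by simp
      also have "\<dots> = c^(n div m) * z^(n mod m)" using tt(2) by (simp only: power_add power_mult)
      finally show ?thesis by simp
    qed
    finally show ?thesis .
  qed
  have Hc': "H' \<subseteq> carrier G" using subgroup.subset[OF H'sub] .
  have chi_in: "chi z \<in> extset G H \<psi> H'" if z: "z^m = c" for z
    unfolding extset_def ischar_def
  proof (intro CollectI conjI ballI allI impI)
    fix x y assume "x \<in> H'" "y \<in> H'"
    then obtain h h' and i j :: nat where hi: "h \<in> H" "x = h \<otimes> g[^]i" "h' \<in> H" "y = h' \<otimes> g[^]j"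
      unfolding H'_def by auto
    have hc: "h \<in> carrier G" "h' \<in> carrier G" using hi Hc by auto
    have "x \<otimes> y = (h \<otimes> h') \<otimes> (g[^]i \<otimes> g[^]j)" using hi hc g by (simp add: m_ac)
    also have "g[^]i \<otimes> g[^]j = g[^](i+j)" using g by (simp add: nat_pow_mult)
    finally have "x \<otimes> y = (h \<otimes> h') \<otimes> g[^](i+j)" .
    hence "chi z (x \<otimes> y) = \<psi> (h \<otimes> h') * z^(i+j)"
      using chi_gen subgroup.m_closed[OF H hi(1,3)] z by simp
    also have "\<dots> = (\<psi> h * z^i) * (\<psi> h' * z^j)" using psim[OF hi(1,3)] by (simp add: power_add)
    also have "\<dots> = chi z x * chi z y" using hi chi_gen z by simp
    finally show "chi z (x \<otimes> y) = chi z x * chi z y" .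
  next
    have "chi z (\<one> \<otimes> g[^](0::nat)) = 1" using chi_gen[OF subgroup.one_closed[OF H] z, of 0] psi1 by simp
    thus "chi z \<one> = 1" by simp
  next
    fix x assume "x \<notin> H'" thus "chi z x = 0" unfolding chi_def by simp
  next
    fix x assume "x \<in> H"
    hence "chi z (x \<otimes> g[^](0::nat)) = \<psi> x" using chi_gen[OF _ z, of x 0] by simp
    thus "chi z x = \<psi> x" using \<open>x \<in> H\<close> Hc by auto
  qed
  have g_in: "\<one> \<otimes> g[^](1::nat) = g" using g by simp
  have chi_g: "chi z g = z" if "z^m = c" for z
    using chi_eq[OF subgroup.one_closed[OF H] m1, of z] g_in psi1 by simp
  have all_chi: "f = chi (f g)" and fg: "(f g)^m = c" if f: "f \<in> extset G H \<psi> H'" for f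
  proof -
    have fc: "ischar G H' f" "\<And>x. x \<in> H \<Longrightarrow> f x = \<psi> x" using f unfolding extset_def by auto
    have gH': "g \<in> H'" using inH'[OF subgroup.one_closed[OF H], of 1] g_in by simp
    show fg: "(f g)^m = c" using ischar_pow[OF H'sub fc(1) gH', of m] fc(2)[OF m(2)] c_def by simp
    show "f = chi (f g)"
    proof
      fix x show "f x = chi (f g) x"
      proof (cases "x \<in> H'")
        case True
        then obtain h and i::nat where hi: "h \<in> H" "x = h \<otimes> g[^]i" unfolding H'_def by auto
        have "h \<in> H'" "g[^]i \<in> H'" using inH'[OF hi(1), of 0] inH'[OF subgroup.one_closed[OF H], of i] hi Hc g by auto
        hence "f x = f h * f (g[^]i)" using fc(1) hi unfolding ischar_def by simp
        also have "\<dots> = \<psi> h * (f g)^i" using fc(2)[OF hi(1)] ischar_pow[OF H'sub fc(1) gH'] by simp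
        also have "\<dots> = chi (f g) x" using chi_gen[OF hi(1) fg] hi by simp
        finally show ?thesis .
      next
        case False
        thus ?thesis using fc(1) unfolding ischar_def chi_def by simp
      qed
    qed
  qed
  have E: "extset G H \<psi> H' = chi ` {z. z^m = c}"
    using all_chi fg chi_in by blast
  have inj: "inj_on chi {z. z^m = c}"
    by (intro inj_onI) (metis chi_g mem_Collect_eq)
  have cE: "card (extset G H \<psi> H') = m"
    unfolding E using card_image[OF inj] card_nth_roots[OF c0 m(1)] by simp
  have fE: "finite (extset G H \<psi> H')" unfolding E using finite_nth_roots[OF m(1)] by simp
  show ?thesis by (rule that[OF H'sub HH' cardH' fE cE])
qed

lemma ext_count:
  assumes fin: "finite (carrier G)"
  shows "subgroup H G \<Longrightarrow> ischar G H \<psi> \<Longrightarrow> finite (extset G H \<psi> (carrier G)) \<and>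
           card (extset G H \<psi> (carrier G)) * card H = card (carrier G)"
proof (induction "card (carrier G) - card H" arbitrary: H \<psi> rule: less_induct)
  case (less H \<psi>)
  have Hc: "H \<subseteq> carrier G" using subgroup.subset[OF less.prems(1)] .
  show ?case
  proof (cases "H = carrier G")
    case True
    have "extset G H \<psi> (carrier G) = {\<psi>}"
    proof (intro equalityI subsetI)
      fix f assume "f \<in> extset G H \<psi> (carrier G)"
      hence f: "ischar G (carrier G) f" "\<forall>x\<in>H. f x = \<psi> x" unfolding extset_def by auto
      have "f = \<psi>"
      proof
        fix x show "f x = \<psi> x"
          using f less.prems(2) True unfolding ischar_def by (cases "x \<in> carrier G") auto
      qed
      thus "f \<in> {\<psi>}" by simp
    next
      fix f assume "f \<in> {\<psi>}" thus "f \<in> extset G H \<psi> (carrier G)"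
        using less.prems True unfolding extset_def by auto
    qed
    thus ?thesis using True by simp
  next
    case False
    then obtain g where g: "g \<in> carrier G" "g \<notin> H" using Hc by blast
    obtain H' m where H': "subgroup H' G" "H \<subset> H'" "card H' = m * card H"
        "finite (extset G H \<psi> H')" "card (extset G H \<psi> H') = m"
      by (rule ext_step[OF fin less.prems(1) g less.prems(2)])
    have H'c: "H' \<subseteq> carrier G" using subgroup.subset[OF H'(1)] .
    have finH': "finite H'" using finite_subset[OF H'c fin] .
    have lt: "card (carrier G) - card H' < card (carrier G) - card H"
      using psubset_card_mono[OF finH' H'(2)] card_mono[OF fin H'c] by linarith
    define E where "E = extset G H \<psi> H'"
    have IH: "finite (extset G H' \<psi>' (carrier G)) \<and> card (extset G H' \<psi>' (carrier G)) * card H' = card (carrier G)"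
      if "\<psi>' \<in> E" for \<psi>'
      using less.hyps[OF lt H'(1)] that unfolding E_def extset_def by blast
    have U: "extset G H \<psi> (carrier G) = (\<Union>\<psi>'\<in>E. extset G H' \<psi>' (carrier G))"
    proof (intro equalityI subsetI)
      fix f assume f: "f \<in> extset G H \<psi> (carrier G)"
      hence fc: "ischar G (carrier G) f" "\<forall>x\<in>H. f x = \<psi> x" unfolding extset_def by auto
      define \<psi>' where "\<psi>' = (\<lambda>x. if x \<in> H' then f x else 0)"
      have "ischar G H' \<psi>'"
        unfolding ischar_def
      proof (intro conjI ballI allI impI)
        fix x y assume "x \<in> H'" "y \<in> H'"
        moreover have "x \<otimes> y \<in> H'" using subgroup.m_closed[OF H'(1) \<open>x \<in> H'\<close> \<open>y \<in> H'\<close>] .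
        ultimately show "\<psi>' (x \<otimes> y) = \<psi>' x * \<psi>' y" using fc(1) H'c unfolding \<psi>'_def ischar_def by auto
      next
        show "\<psi>' \<one> = 1" using subgroup.one_closed[OF H'(1)] fc(1) unfolding \<psi>'_def ischar_def by simp
      next
        fix x assume "x \<notin> H'" thus "\<psi>' x = 0" unfolding \<psi>'_def by simp
      qed
      hence "\<psi>' \<in> E" unfolding E_def extset_def \<psi>'_def using fc(2) H'(2) by auto
      moreover have "f \<in> extset G H' \<psi>' (carrier G)" using fc(1) unfolding extset_def \<psi>'_def by simp
      ultimately show "f \<in> (\<Union>\<psi>'\<in>E. extset G H' \<psi>' (carrier G))" by blast
    next
      fix f assume "f \<in> (\<Union>\<psi>'\<in>E. extset G H' \<psi>' (carrier G))"
      then obtain \<psi>' where "\<psi>' \<in> E" "f \<in> extset G H' \<psi>' (carrier G)" by blast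
      thus "f \<in> extset G H \<psi> (carrier G)" using H'(2) unfolding E_def extset_def by auto
    qed
    have disj: "extset G H' a (carrier G) \<inter> extset G H' b (carrier G) = {}"
      if "a \<in> E" "b \<in> E" "a \<noteq> b" for a b
    proof (rule ccontr)
      assume "extset G H' a (carrier G) \<inter> extset G H' b (carrier G) \<noteq> {}"
      then obtain f where f: "\<forall>x\<in>H'. f x = a x" "\<forall>x\<in>H'. f x = b x" unfolding extset_def by auto
      have ab: "ischar G H' a" "ischar G H' b" using that unfolding E_def extset_def by auto
      have "a = b"
      proof
        fix x show "a x = b x" using f ab unfolding ischar_def by (cases "x \<in> H'") auto
      qed
      thus False using that by simp
    qed
    have finE: "finite E" using H'(4) unfolding E_def .
    have fin': "finite (extset G H \<psi> (carrier G))" unfolding U using finE IH by blast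
    have cH'0: "card H' \<noteq> 0" using H'(2) finH' by (auto simp: card_eq_0_iff)
    have m0: "m \<noteq> 0" using H'(3) cH'0 by auto
    have "E \<noteq> {}" using H'(5) m0 unfolding E_def by auto
    then obtain \<psi>0 where "\<psi>0 \<in> E" by blast
    then have k: "card (extset G H' \<psi>0 (carrier G)) * card H' = card (carrier G)" using IH by blast
    define k where "k = card (extset G H' \<psi>0 (carrier G))"
    have eachk: "card (extset G H' \<psi>' (carrier G)) = k" if "\<psi>' \<in> E" for \<psi>'
      using IH[OF that] k cH'0 unfolding k_def by (metis mult_right_cancel)
    have "card (extset G H \<psi> (carrier G)) = (\<Sum>\<psi>'\<in>E. card (extset G H' \<psi>' (carrier G)))"
      unfolding U using IH disj finE by (intro card_UN_disjoint) auto
    also have "\<dots> = m * k" using eachk H'(5) unfolding E_def by simp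
    finally have "card (extset G H \<psi> (carrier G)) * card H = k * card H'" using H'(3) by simp
    thus ?thesis using k fin' unfolding k_def by simp
  qed
qed

end


definition UG :: "nat \<Rightarrow> nat monoid" where
  "UG q = \<lparr>carrier = {n. n < q \<and> coprime n q}, monoid.mult = (\<lambda>x y. x * y mod q), one = 1\<rparr>"

lemma UG_simps: "carrier (UG q) = {n. n < q \<and> coprime n q}" "x \<otimes>\<^bsub>UG q\<^esub> y = x * y mod q"
  "\<one>\<^bsub>UG q\<^esub> = 1"
  by (simp_all add: UG_def)

lemma UG_comm_group: assumes "q \<ge> 2" shows "comm_group (UG q)"
proof (rule comm_groupI, unfold UG_simps)
  fix x y assume "x \<in> {n. n < q \<and> coprime n q}" "y \<in> {n. n < q \<and> coprime n q}"
  thus "x * y mod q \<in> {n. n < q \<and> coprime n q}" using assms by auto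
next
  show "1 \<in> {n. n < q \<and> coprime n q}" using assms by auto
next
  fix x y z :: nat
  show "x * y mod q * z mod q = x * (y * z mod q) mod q" by (simp add: mod_mult_eq mult.assoc mod_mult_right_eq mod_mult_left_eq)
next
  fix x y :: nat show "x * y mod q = y * x mod q" by (simp add: mult.commute)
next
  fix x assume "x \<in> {n. n < q \<and> coprime n q}" thus "1 * x mod q = x" by simp
next
  fix x assume x: "x \<in> {n. n < q \<and> coprime n q}"
  then obtain y where y: "[x * y = Suc 0] (mod q)" using cong_solve_coprime_nat by blast
  have "coprime (y mod q) q"
  proof -
    have "coprime (x * y) q" using y assms
      by (metis One_nat_def cong_imp_coprime cong_sym coprime_1_left)
    thus ?thesis using assms by simp
  qed
  moreover have "y mod q * x mod q = 1" using y assms unfolding cong_def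
    by (simp add: mod_mult_right_eq mult.commute)
  ultimately show "\<exists>y\<in>{n. n < q \<and> coprime n q}. y * x mod q = 1" using assms
    by (intro bexI[of _ "y mod q"]) auto
qed

definition Usub :: "nat \<Rightarrow> nat \<Rightarrow> nat set" where
  "Usub q d = {n. n < q \<and> coprime n q \<and> n mod d = 1 mod d}"

lemma Usub_subgroup: assumes "q \<ge> 2" "d dvd q" shows "subgroup (Usub q d) (UG q)"
proof -
  interpret G: comm_group "UG q" using UG_comm_group[OF assms(1)] .
  show ?thesis
  proof (rule G.subgroupI)
    show "Usub q d \<subseteq> carrier (UG q)" unfolding Usub_def UG_simps by auto
    show "Usub q d \<noteq> {}" using assms unfolding Usub_def by (intro exI[of _ 1] ex_in_conv[THEN iffD1]) auto
  next
    fix a assume a: "a \<in> Usub q d"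
    hence ac: "a \<in> carrier (UG q)" unfolding Usub_def UG_simps by auto
    define i where "i = inv\<^bsub>UG q\<^esub> a"
    have ic: "i \<in> carrier (UG q)" using ac unfolding i_def by simp
    have "a \<otimes>\<^bsub>UG q\<^esub> i = 1" using ac G.r_inv unfolding i_def by (simp add: UG_simps)
    hence "[a * i = 1] (mod q)" unfolding UG_simps cong_def using assms by simp
    hence c1: "[a * i = 1] (mod d)" using assms(2) cong_dvd_modulus_nat by blast
    have c2: "[a = 1] (mod d)" using a unfolding Usub_def cong_def by simp
    have "[1 * i = 1] (mod d)"
      using cong_trans[OF cong_sym[OF cong_scalar_right[OF c2, of i]] c1] .
    hence im: "i mod d = 1 mod d" unfolding cong_def by simp
    have "i < q" "coprime i q" using ic by (simp_all add: UG_simps)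
    hence "i \<in> Usub q d" using im unfolding Usub_def by blast
    thus "inv\<^bsub>UG q\<^esub> a \<in> Usub q d" by (simp only: i_def)
  next
    fix a b assume "a \<in> Usub q d" "b \<in> Usub q d"
    hence ab: "a < q" "coprime a q" "a mod d = 1 mod d" "b < q" "coprime b q" "b mod d = 1 mod d"
      unfolding Usub_def by auto
    have "a * b mod q mod d = a * b mod d" using assms(2) by (simp add: mod_mod_cancel)
    also have "\<dots> = (a mod d) * (b mod d) mod d" by (simp add: mod_mult_eq)
    also have "\<dots> = 1 mod d" using ab by (simp add: mod_mult_eq)
    finally have "a * b mod q mod d = 1 mod d" .
    moreover have "a * b mod q < q" "coprime (a * b mod q) q" using ab assms by auto
    ultimately show "a \<otimes>\<^bsub>UG q\<^esub> b \<in> Usub q d" unfolding Usub_def UG_simps by blast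
  qed
qed

lemma card_coprime_below: assumes "d > 0" shows "card {r. r < d \<and> coprime r d} = totient d"
proof (cases "d = 1")
  case True
  have "{r. r < d \<and> coprime r d} = {0}" using True by auto
  thus ?thesis using True by simp
next
  case False
  hence "{r. r < d \<and> coprime r d} = totatives d" using assms
    by (auto simp: totatives_def order.order_iff_strict intro!: Nat.gr0I)
  thus ?thesis by (simp add: totient_def)
qed

lemma card_UG: "q \<ge> 2 \<Longrightarrow> card (carrier (UG q)) = totient q"
  using card_coprime_below[of q] by (simp add: UG_simps)

lemma finite_UG: "finite (carrier (UG q))"
  by (simp add: UG_simps)

lemma totient_le_Usub:
  assumes q: "q \<ge> 2" and d: "d dvd q"
  shows "totient q \<le> totient d * card (Usub q d)"
proof -
  interpret G: comm_group "UG q" using UG_comm_group[OF q] .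
  have d0: "d > 0" using d q by (auto intro!: Nat.gr0I)
  define C where "C = carrier (UG q)"
  define I where "I = (\<lambda>n. n mod d) ` C"
  define Fb where "Fb = (\<lambda>r. {n \<in> C. n mod d = r})"
  have CU: "C = (\<Union>r\<in>I. Fb r)" unfolding I_def Fb_def by auto
  have finI: "finite I" unfolding I_def C_def by (simp add: finite_UG)
  have cI: "card I \<le> totient d"
  proof -
    have "I \<subseteq> {r. r < d \<and> coprime r d}"
    proof
      fix r assume "r \<in> I"
      then obtain n where n: "n \<in> C" "r = n mod d" unfolding I_def by auto
      obtain k where k: "q = d * k" using d by (elim dvdE)
      have "coprime n q" using n unfolding C_def UG_simps by simp
      hence "coprime n d" unfolding k by simp
      thus "r \<in> {r. r < d \<and> coprime r d}" using n d0 by simp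
    qed
    hence "card I \<le> card {r. r < d \<and> coprime r d}" by (intro card_mono) auto
    thus ?thesis using card_coprime_below[OF d0] by simp
  qed
  have cF: "card (Fb r) \<le> card (Usub q d)" if rI: "r \<in> I" for r
  proof -
    obtain a where a: "a \<in> C" "a mod d = r" using rI unfolding I_def by auto
    have ac: "a \<in> carrier (UG q)" using a C_def by simp
    define ia where "ia = inv\<^bsub>UG q\<^esub> a"
    have iac: "ia \<in> carrier (UG q)" using ac unfolding ia_def by simp
    have aia: "[ia * a = 1] (mod q)" using G.l_inv[OF ac] q unfolding ia_def cong_def by (simp add: UG_simps)
    have "inj_on (\<lambda>n. ia \<otimes>\<^bsub>UG q\<^esub> n) (Fb r)"
      by (intro inj_onI) (use iac in \<open>auto simp: Fb_def C_def\<close>)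
    moreover have "(\<lambda>n. ia \<otimes>\<^bsub>UG q\<^esub> n) ` Fb r \<subseteq> Usub q d"
    proof
      fix y assume "y \<in> (\<lambda>n. ia \<otimes>\<^bsub>UG q\<^esub> n) ` Fb r"
      then obtain n where n: "n \<in> C" "n mod d = r" "y = ia \<otimes>\<^bsub>UG q\<^esub> n" unfolding Fb_def by auto
      have yc: "y \<in> carrier (UG q)" using n iac C_def by simp
      have "[n = a] (mod d)" using n a unfolding cong_def by simp
      hence "[ia * n = ia * a] (mod d)" by (rule cong_scalar_left)
      moreover have "[ia * a = 1] (mod d)" using cong_dvd_modulus_nat[OF aia d] .
      ultimately have "[ia * n = 1] (mod d)" by (rule cong_trans)
      hence "ia * n mod q mod d = 1 mod d" using d by (simp add: cong_def mod_mod_cancel)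
      thus "y \<in> Usub q d" using yc n(3) unfolding Usub_def by (simp add: UG_simps)
    qed
    ultimately show ?thesis using card_inj_on_le[of _ "Fb r" "Usub q d"] by (simp add: Usub_def)
  qed
  have "totient q = card C" using card_UG[OF q] C_def by simp
  also have "\<dots> \<le> (\<Sum>r\<in>I. card (Fb r))" unfolding CU by (rule card_UN_le[OF finI])
  also have "\<dots> \<le> (\<Sum>r\<in>I. card (Usub q d))" using cF by (rule sum_mono)
  also have "\<dots> = card I * card (Usub q d)" by simp
  also have "\<dots> \<le> totient d * card (Usub q d)" using cI by simp
  finally show ?thesis .
qed



lemma dc_props:
  assumes "dirichlet_char q c"
  shows "q > 0" "c 1 = 1" "\<And>n. c (n + q) = c n" "\<And>m n. c (m * n) = c m * c n"
    "\<And>n. c n \<noteq> 0 \<longleftrightarrow> coprime n q"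
  using assms unfolding dirichlet_char_def by auto

lemma dc_mod: assumes "dirichlet_char q c" shows "c (n mod q) = c n"
proof -
  have "c (n mod q + k * q) = c (n mod q)" for k
  proof (induction k)
    case 0 show ?case by simp
  next
    case (Suc k)
    have "c (n mod q + Suc k * q) = c ((n mod q + k * q) + q)" by (simp add: algebra_simps)
    also have "\<dots> = c (n mod q + k*q)" by (rule dc_props(3)[OF assms])
    also have "\<dots> = c (n mod q)" by (rule Suc.IH)
    finally show ?case .
  qed
  from this[of "n div q"] show ?thesis by simp
qed

lemma dc_zero: "dirichlet_char q c \<Longrightarrow> \<not> coprime n q \<Longrightarrow> c n = 0"
  using dc_props(5) by blast

definition Aset :: "nat \<Rightarrow> nat \<Rightarrow> (nat \<Rightarrow> complex) set" where
  "Aset q d = {c \<in> dirichlet_chars q. \<forall>n. coprime n q \<and> [n = 1] (mod d) \<longrightarrow> c n = 1}"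

definition trivU :: "nat \<Rightarrow> nat \<Rightarrow> nat \<Rightarrow> complex" where
  "trivU q d = (\<lambda>x. if x \<in> Usub q d then 1 else 0)"

lemma trivU_char: assumes "q \<ge> 2" "d dvd q" shows "ischar (UG q) (Usub q d) (trivU q d)"
proof -
  have "1 \<in> Usub q d" using assms unfolding Usub_def by auto
  moreover have "x \<otimes>\<^bsub>UG q\<^esub> y \<in> Usub q d" if "x \<in> Usub q d" "y \<in> Usub q d" for x y
    using subgroup.m_closed[OF Usub_subgroup[OF assms] that] .
  ultimately show ?thesis unfolding ischar_def trivU_def by (simp add: UG_simps)
qed

lemma card_Aset:
  assumes q: "q \<ge> 2" and d: "d dvd q"
  shows "finite (Aset q d) \<and> card (Aset q d) * card (Usub q d) = totient q"
proof -
  interpret G: comm_group "UG q" using UG_comm_group[OF q] .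
  define B where "B = extset (UG q) (Usub q d) (trivU q d) (carrier (UG q))"
  have EB: "finite B \<and> card B * card (Usub q d) = totient q"
    using G.ext_count[OF finite_UG Usub_subgroup[OF q d] trivU_char[OF q d]] card_UG[OF q]
    unfolding B_def by simp
  define Phi where "Phi = (\<lambda>c n. if n \<in> carrier (UG q) then c n else (0::complex))"
  define Psi where "Psi = (\<lambda>(f::nat\<Rightarrow>complex) n. f (n mod q))"
  have q0: "q > 0" using q by simp
  have bij: "bij_betw Phi (Aset q d) B"
  proof (rule bij_betw_byWitness[where f' = Psi])
    show "\<forall>c\<in>Aset q d. Psi (Phi c) = c"
    proof
      fix c assume "c \<in> Aset q d"
      hence dc: "dirichlet_char q c" unfolding Aset_def dirichlet_chars_def by simp
      show "Psi (Phi c) = c"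
      proof
        fix n show "Psi (Phi c) n = c n"
          using dc_mod[OF dc, of n] dc_zero[OF dc, of n] q0
          unfolding Psi_def Phi_def UG_simps by auto
      qed
    qed
  next
    show "\<forall>f\<in>B. Phi (Psi f) = f"
    proof
      fix f assume "f \<in> B"
      hence f: "ischar (UG q) (carrier (UG q)) f" unfolding B_def extset_def by simp
      show "Phi (Psi f) = f"
      proof
        fix n show "Phi (Psi f) n = f n"
          using f unfolding Psi_def Phi_def ischar_def UG_simps by auto
      qed
    qed
  next
    show "Phi ` Aset q d \<subseteq> B"
    proof
      fix f assume "f \<in> Phi ` Aset q d"
      then obtain c where c: "c \<in> Aset q d" "f = Phi c" by auto
      hence dc: "dirichlet_char q c" and cU: "\<And>n. coprime n q \<Longrightarrow> [n = 1] (mod d) \<Longrightarrow> c n = 1"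
        unfolding Aset_def dirichlet_chars_def by auto
      have "ischar (UG q) (carrier (UG q)) f"
        unfolding ischar_def
      proof (intro conjI ballI allI impI)
        fix x y assume xy: "x \<in> carrier (UG q)" "y \<in> carrier (UG q)"
        hence "x \<otimes>\<^bsub>UG q\<^esub> y \<in> carrier (UG q)" by simp
        thus "f (x \<otimes>\<^bsub>UG q\<^esub> y) = f x * f y"
          using xy c(2) dc_mod[OF dc, of "x*y"] dc_props(4)[OF dc, of x y] unfolding Phi_def UG_simps by simp
      next
        show "f \<one>\<^bsub>UG q\<^esub> = 1" using c(2) dc_props(2)[OF dc] q unfolding Phi_def UG_simps by simp
      next
        fix x assume "x \<notin> carrier (UG q)" thus "f x = 0" using c(2) unfolding Phi_def by simp
      qed
      moreover have "\<forall>x\<in>Usub q d. f x = trivU q d x"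
      proof
        fix x assume x: "x \<in> Usub q d"
        hence "x \<in> carrier (UG q)" "coprime x q" "[x = 1] (mod d)" unfolding Usub_def UG_simps cong_def by auto
        thus "f x = trivU q d x" using x cU c(2) unfolding Phi_def trivU_def by simp
      qed
      ultimately show "f \<in> B" unfolding B_def extset_def by simp
    qed
  next
    show "Psi ` B \<subseteq> Aset q d"
    proof
      fix c assume "c \<in> Psi ` B"
      then obtain f where f: "f \<in> B" "c = Psi f" by auto
      hence fc: "ischar (UG q) (carrier (UG q)) f" "\<forall>x\<in>Usub q d. f x = trivU q d x"
        unfolding B_def extset_def by auto
      have nz: "f x \<noteq> 0" if "x \<in> carrier (UG q)" for x
        using G.ischar_nonzero[OF G.subgroup_self fc(1) that] .
      have cm: "c n = f (n mod q)" for n using f(2) unfolding Psi_def by simp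
      have "dirichlet_char q c"
        unfolding dirichlet_char_def
      proof (intro conjI allI)
        show "q > 0" by (rule q0)
        show "c 1 = 1" using fc(1) q unfolding cm ischar_def UG_simps by simp
      next
        fix n show "c (n + q) = c n" unfolding cm by simp
      next
        fix m n
        show "c (m * n) = c m * c n"
        proof (cases "coprime m q \<and> coprime n q")
          case True
          hence "m mod q \<in> carrier (UG q)" "n mod q \<in> carrier (UG q)" using q0 unfolding UG_simps by auto
          hence "f ((m mod q) * (n mod q) mod q) = f (m mod q) * f (n mod q)"
            using fc(1) unfolding ischar_def UG_simps by simp
          thus ?thesis unfolding cm by (simp add: mod_mult_eq)
        next
          case False
          hence "\<not> coprime (m * n) q" by auto
          hence "(m * n) mod q \<notin> carrier (UG q)" "m mod q \<notin> carrier (UG q) \<or> n mod q \<notin> carrier (UG q)"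
            using False q0 unfolding UG_simps by auto
          thus ?thesis using fc(1) unfolding cm ischar_def by auto
        qed
      next
        fix n show "c n \<noteq> 0 \<longleftrightarrow> coprime n q"
        proof
          assume "c n \<noteq> 0"
          hence "n mod q \<in> carrier (UG q)" using fc(1) unfolding cm ischar_def by auto
          thus "coprime n q" using q0 unfolding UG_simps by simp
        next
          assume "coprime n q"
          hence "n mod q \<in> carrier (UG q)" using q0 unfolding UG_simps by simp
          thus "c n \<noteq> 0" using nz unfolding cm by simp
        qed
      qed
      moreover have "c n = 1" if "coprime n q" "[n = 1] (mod d)" for n
      proof -
        have "n mod q \<in> Usub q d" using that q0 d unfolding Usub_def cong_def by (simp add: mod_mod_cancel)
        thus ?thesis using fc(2) unfolding cm trivU_def by simp
      qed
      ultimately show "c \<in> Aset q d" unfolding Aset_def dirichlet_chars_def by blast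
    qed
  qed
  show ?thesis using EB bij_betw_same_card[OF bij] bij_betw_finite[OF bij] by simp
qed



lemma Usub_card_pos: assumes "q \<ge> 2" shows "card (Usub q d) > 0"
proof -
  have "1 \<in> Usub q d" using assms unfolding Usub_def by auto
  moreover have "finite (Usub q d)" unfolding Usub_def by simp
  ultimately show ?thesis by (auto simp: card_gt_0_iff)
qed

lemma Aset_le: assumes q: "q \<ge> 2" and d: "d dvd q" shows "card (Aset q d) \<le> totient d"
proof -
  have "card (Aset q d) * card (Usub q d) \<le> totient d * card (Usub q d)"
    using card_Aset[OF q d] totient_le_Usub[OF q d] by simp
  thus ?thesis using Usub_card_pos[OF q] by simp
qed

lemma chars_card: assumes q: "q \<ge> 2"
  shows "finite (dirichlet_chars q) \<and> card (dirichlet_chars q) = totient q"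
proof -
  have A: "Aset q q = dirichlet_chars q"
  proof (intro equalityI subsetI)
    fix c assume "c \<in> dirichlet_chars q"
    hence dc: "dirichlet_char q c" unfolding dirichlet_chars_def by simp
    have "c n = 1" if "[n = 1] (mod q)" for n
    proof -
      have "n mod q = 1" using that q unfolding cong_def by simp
      thus ?thesis using dc_mod[OF dc, of n] dc_props(2)[OF dc] by simp
    qed
    thus "c \<in> Aset q q" using \<open>c \<in> dirichlet_chars q\<close> unfolding Aset_def by auto
  qed (auto simp: Aset_def)
  have U: "Usub q q = {1}" using q unfolding Usub_def by auto
  show ?thesis using card_Aset[OF q dvd_refl] A U by simp
qed

lemma conductor_props:
  assumes q: "q \<ge> 2" and c: "c \<in> dirichlet_chars q"
  shows "conductor q c > 0" "conductor q c dvd q"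
    "\<And>n. coprime n q \<Longrightarrow> [n = 1] (mod conductor q c) \<Longrightarrow> c n = 1"
proof -
  have dc: "dirichlet_char q c" using c unfolding dirichlet_chars_def by simp
  let ?P = "\<lambda>d. d > 0 \<and> d dvd q \<and> (\<forall>n. coprime n q \<and> [n = 1] (mod d) \<longrightarrow> c n = 1)"
  have "c n = 1" if "[n = 1] (mod q)" for n
  proof -
    have "n mod q = 1" using that q unfolding cong_def by simp
    thus ?thesis using dc_mod[OF dc, of n] dc_props(2)[OF dc] by simp
  qed
  hence "?P q" using q by auto
  hence "?P (conductor q c)" unfolding conductor_def by (rule LeastI)
  thus "conductor q c > 0" "conductor q c dvd q"
    "\<And>n. coprime n q \<Longrightarrow> [n = 1] (mod conductor q c) \<Longrightarrow> c n = 1" by auto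
qed

lemma count_dvd_e:
  assumes q: "q \<ge> 2" and m: "m dvd q"
  shows "card {c \<in> dirichlet_chars q. m dvd q div conductor q c} \<le> totient (q div m)"
proof -
  have "{c \<in> dirichlet_chars q. m dvd q div conductor q c} \<subseteq> Aset q (q div m)"
  proof
    fix c assume c: "c \<in> {c \<in> dirichlet_chars q. m dvd q div conductor q c}"
    hence cc: "c \<in> dirichlet_chars q" "m dvd q div conductor q c" by auto
    note cp = conductor_props[OF q cc(1)]
    obtain t where t: "q div conductor q c = m * t" using cc(2) by (elim dvdE)
    have qe: "q = conductor q c * (m * t)" using t cp(2) by (metis dvd_mult_div_cancel)
    have m0: "m > 0" using qe q by (auto intro!: Nat.gr0I)
    define K where "K = conductor q c * t"
    have q2: "q = m * K" using qe unfolding K_def by (simp add: ac_simps)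
    have "q div m = K" using m0 by (subst q2) simp
    hence "q div m = conductor q c * t" unfolding K_def .
    hence dd: "conductor q c dvd q div m" by simp
    have "c n = 1" if "coprime n q" "[n = 1] (mod q div m)" for n
      using cp(3)[OF that(1) cong_dvd_modulus_nat[OF that(2) dd]] .
    thus "c \<in> Aset q (q div m)" using cc(1) unfolding Aset_def by auto
  qed
  hence "card {c \<in> dirichlet_chars q. m dvd q div conductor q c} \<le> card (Aset q (q div m))"
    using card_Aset[OF q, of "q div m"] m by (intro card_mono) auto
  also have "\<dots> \<le> totient (q div m)" using Aset_le[OF q] m by auto
  finally show ?thesis .
qed

lemma totient_mult_ge: "totient a * totient b \<le> totient (a * b)"
proof (cases "a = 0 \<or> b = 0")
  case False
  have g0: "gcd a b > 0" using False by simp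
  have "totient a * totient b * gcd a b = totient (a * b) * totient (gcd a b)"
    using totient_gcd[of a b] by simp
  also have "\<dots> \<le> totient (a * b) * gcd a b" by (intro mult_left_mono totient_le) auto
  finally have "totient a * totient b * gcd a b \<le> totient (a * b) * gcd a b" .
  thus ?thesis using g0 mult_le_cancel2 by blast
qed auto

lemma count_dvd_e_real:
  assumes q: "q \<ge> 2" and m: "m dvd q"
  shows "real (card {c \<in> dirichlet_chars q. m dvd q div conductor q c}) \<le> real (totient q) / real (totient m)"
proof -
  have m0: "m > 0" using m q by (auto intro!: Nat.gr0I)
  have t0: "totient m > 0" using m0 by simp
  have "card {c \<in> dirichlet_chars q. m dvd q div conductor q c} * totient m \<le> totient (q div m) * totient m"
    using count_dvd_e[OF q m] by simp
  also have "\<dots> \<le> totient q" using totient_mult_ge[of "q div m" m] m by simp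
  finally have "real (card {c \<in> dirichlet_chars q. m dvd q div conductor q c}) * real (totient m) \<le> real (totient q)"
    by (metis of_nat_le_iff of_nat_mult)
  thus ?thesis using t0 by (simp add: field_simps)
qed

lemma conj_char: assumes "c \<in> dirichlet_chars q" shows "(\<lambda>n. cnj (c n)) \<in> dirichlet_chars q"
  using assms unfolding dirichlet_chars_def dirichlet_char_def by auto

lemma conj_conductor: "conductor q (\<lambda>n. cnj (c n)) = conductor q c"
proof -
  have "(\<forall>n. coprime n q \<and> [n = 1] (mod d) \<longrightarrow> cnj (c n) = 1) \<longleftrightarrow>
        (\<forall>n. coprime n q \<and> [n = 1] (mod d) \<longrightarrow> c n = 1)" for d
    by (metis complex_cnj_cnj complex_cnj_one)
  thus ?thesis unfolding conductor_def by simp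
qed



definition PP :: "nat \<Rightarrow> (nat \<times> nat) set" where
  "PP q = Sigma (prime_factors q) (\<lambda>p. {1..multiplicity p q})"

lemma finite_PP: "finite (PP q)" unfolding PP_def by (intro finite_SigmaI) auto

lemma logsum:
  assumes q: "q > 0" and e: "e dvd q"
  shows "ln (real e) = (\<Sum>(p,i)\<in>PP q. if p^i dvd e then ln (real p) else 0)"
proof -
  have e0: "e > 0" using e q by (auto intro!: Nat.gr0I)
  have "real e = (\<Prod>p\<in>prime_factors e. real p ^ multiplicity p e)"
    by (subst prime_factorization_nat[OF e0]) simp
  moreover have "ln (\<Prod>p\<in>prime_factors e. real p ^ multiplicity p e) = (\<Sum>p\<in>prime_factors e. ln (real p ^ multiplicity p e))"
    by (rule ln_prod) (auto simp: in_prime_factors_iff prime_gt_0_nat)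
  ultimately have "ln (real e) = (\<Sum>p\<in>prime_factors e. ln (real p ^ multiplicity p e))" by simp
  also have "\<dots> = (\<Sum>p\<in>prime_factors e. real (multiplicity p e) * ln (real p))"
    by (intro sum.cong refl) (simp add: ln_realpow prime_gt_0_nat in_prime_factors_iff)
  also have "\<dots> = (\<Sum>p\<in>prime_factors q. real (multiplicity p e) * ln (real p))"
  proof (rule sum.mono_neutral_left)
    show "finite (prime_factors q)" by simp
    show "prime_factors e \<subseteq> prime_factors q" using e q e0 by (auto simp: in_prime_factors_iff intro: dvd_trans)
    show "\<forall>p\<in>prime_factors q - prime_factors e. real (multiplicity p e) * ln (real p) = 0"
      using e0 by (auto simp: in_prime_factors_iff not_dvd_imp_multiplicity_0)
  qed
  also have "\<dots> = (\<Sum>p\<in>prime_factors q. \<Sum>i\<in>{1..multiplicity p q}. if p^i dvd e then ln (real p) else 0)"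
  proof (intro sum.cong refl)
    fix p assume p: "p \<in> prime_factors q"
    hence pp: "prime p" by (simp add: in_prime_factors_iff)
    have nu: "\<not> is_unit p" using pp prime_gt_1_nat by auto
    have le: "multiplicity p e \<le> multiplicity p q" using dvd_imp_multiplicity_le[OF e] q by simp
    have iff: "p^i dvd e \<longleftrightarrow> i \<le> multiplicity p e" for i
      using power_dvd_iff_le_multiplicity[of e p i] e0 nu by simp
    have "{1..multiplicity p q} \<inter> {i. p^i dvd e} = {1..multiplicity p e}"
      unfolding iff using le by auto
    hence "(\<Sum>i\<in>{1..multiplicity p q}. if p^i dvd e then ln (real p) else 0) = real (multiplicity p e) * ln (real p)"
      by (simp add: sum.If_cases)
    thus "real (multiplicity p e) * ln (real p) = (\<Sum>i\<in>{1..multiplicity p q}. if p^i dvd e then ln (real p) else 0)" by simp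
  qed
  also have "\<dots> = (\<Sum>(p,i)\<in>PP q. if p^i dvd e then ln (real p) else 0)"
    unfolding PP_def by (subst sum.Sigma) auto
  finally show ?thesis .
qed

definition uu :: "nat \<times> nat \<Rightarrow> nat \<times> nat \<Rightarrow> real" where
  "uu a b = (if fst a = fst b then 2 / real (fst a) ^ (max (snd a) (snd b))
             else 4 / (real (fst a) ^ snd a * real (fst b) ^ snd b))"

lemma totient_pp_ge: assumes "prime p" "k > 0" shows "real (totient (p^k)) \<ge> real p ^ k / 2"
proof -
  have p2: "p \<ge> 2" using prime_ge_2_nat[OF assms(1)] .
  have "real (totient (p^k)) = real p ^ (k - 1) * (real p - 1)"
    using totient_prime_power[OF assms] p2 by (simp add: of_nat_diff)
  also have "\<dots> \<ge> real p ^ (k - 1) * (real p / 2)" using p2 by (intro mult_left_mono) auto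
  finally have "real (totient (p^k)) \<ge> real p ^ (k - 1) * real p / 2" by simp
  also have "real p ^ (k - 1) * real p = real p ^ k" using assms(2)
    by (metis Suc_diff_1 power_Suc2)
  finally show ?thesis .
qed

lemma e_dvd: assumes q: "q \<ge> 2" and c: "c \<in> dirichlet_chars q" shows "q div conductor q c dvd q"
  using conductor_props(2)[OF q c] by (metis dvd_mult_div_cancel dvd_triv_right)

lemma pair_count:
  assumes q: "q \<ge> 2" and a: "a \<in> PP q" and b: "b \<in> PP q"
  shows "real (card {c \<in> dirichlet_chars q. fst a ^ snd a dvd q div conductor q c \<and> fst b ^ snd b dvd q div conductor q c})
          \<le> real (totient q) * uu a b"
proof -
  obtain p i where ai: "a = (p, i)" by (cases a)
  obtain p' j where bj: "b = (p', j)" by (cases b)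
  have pp: "prime p" "prime p'" "i > 0" "j > 0" "i \<le> multiplicity p q" "j \<le> multiplicity p' q"
    using a b ai bj unfolding PP_def by (auto simp: in_prime_factors_iff)
  have q0: "q \<noteq> 0" using q by simp
  have dq: "p^i dvd q" "p'^j dvd q"
  proof -
    have "p \<noteq> 1" "p' \<noteq> 1" using pp by auto
    thus "p^i dvd q" "p'^j dvd q"
      using pp q0 power_dvd_iff_le_multiplicity[of q p i] power_dvd_iff_le_multiplicity[of q p' j] by auto
  qed
  define S where "S = {c \<in> dirichlet_chars q. p ^ i dvd q div conductor q c \<and> p' ^ j dvd q div conductor q c}"
  have finS: "finite {c \<in> dirichlet_chars q. m dvd q div conductor q c}" for m
    using chars_card[OF q] by simp
  show ?thesis
  proof (cases "p = p'")
    case True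
    define k where "k = max i j"
    have k: "k > 0" "p^k dvd q" using pp dq True unfolding k_def by (auto simp: max_def)
    have "S \<subseteq> {c \<in> dirichlet_chars q. p^k dvd q div conductor q c}"
      unfolding S_def k_def True by (auto simp: max_def)
    hence "real (card S) \<le> real (card {c \<in> dirichlet_chars q. p^k dvd q div conductor q c})"
      using finS by (intro of_nat_mono card_mono) auto
    also have "\<dots> \<le> real (totient q) / real (totient (p^k))" by (rule count_dvd_e_real[OF q k(2)])
    also have "\<dots> \<le> real (totient q) / (real p ^ k / 2)"
      using totient_pp_ge[OF pp(1) k(1)] pp(1) prime_gt_0_nat[OF pp(1)]
      by (intro divide_left_mono) auto
    also have "\<dots> = real (totient q) * uu a b"
      unfolding uu_def ai bj k_def using True by simp
    finally show ?thesis unfolding S_def ai bj by simp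
  next
    case False
    have cop: "coprime (p^i) (p'^j)" using False pp by (simp add: primes_coprime)
    have mq: "p^i * p'^j dvd q" using divides_mult[OF dq cop] .
    have "S \<subseteq> {c \<in> dirichlet_chars q. p^i * p'^j dvd q div conductor q c}"
      unfolding S_def using cop by (auto intro: divides_mult)
    hence "real (card S) \<le> real (card {c \<in> dirichlet_chars q. p^i * p'^j dvd q div conductor q c})"
      using finS by (intro of_nat_mono card_mono) auto
    also have "\<dots> \<le> real (totient q) / real (totient (p^i * p'^j))" by (rule count_dvd_e_real[OF q mq])
    also have "real (totient (p^i * p'^j)) = real (totient (p^i)) * real (totient (p'^j))"
      using totient_mult_coprime[OF cop] by simp
    also have "real (totient q) / \<dots> \<le> real (totient q) / ((real p ^ i / 2) * (real p' ^ j / 2))"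
      using totient_pp_ge[OF pp(1) pp(3)] totient_pp_ge[OF pp(2) pp(4)] prime_gt_0_nat[OF pp(1)] prime_gt_0_nat[OF pp(2)]
      by (intro divide_left_mono mult_mono mult_pos_pos) auto
    also have "\<dots> = real (totient q) * uu a b"
      unfolding uu_def ai bj using False by simp
    finally show ?thesis unfolding S_def ai bj by simp
  qed
qed

lemma moment:
  assumes q: "q \<ge> 2"
  shows "(\<Sum>c\<in>dirichlet_chars q. (ln (real (q div conductor q c)))^2)
          \<le> real (totient q) * (\<Sum>a\<in>PP q. \<Sum>b\<in>PP q. ln (real (fst a)) * ln (real (fst b)) * uu a b)"
proof -
  define X where "X = dirichlet_chars q"
  define f where "f c a = (if fst a ^ snd a dvd q div conductor q c then ln (real (fst a)) else 0)" for c a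
  have finX: "finite X" using chars_card[OF q] unfolding X_def by simp
  have lnc: "ln (real (q div conductor q c)) = (\<Sum>a\<in>PP q. f c a)" if "c \<in> X" for c
  proof -
    have "ln (real (q div conductor q c)) = (\<Sum>(p,i)\<in>PP q. if p^i dvd (q div conductor q c) then ln (real p) else 0)"
      using logsum[of q "q div conductor q c"] e_dvd[OF q] that q unfolding X_def by simp
    also have "\<dots> = (\<Sum>a\<in>PP q. f c a)" unfolding f_def by (intro sum.cong refl) (auto simp: case_prod_beta)
    finally show ?thesis .
  qed
  have lnpos: "ln (real (fst a)) \<ge> 0" if "a \<in> PP q" for a
  proof -
    have "prime (fst a)" using that unfolding PP_def by (auto simp: in_prime_factors_iff)
    hence "real (fst a) \<ge> 1" using prime_gt_0_nat by (simp add: Suc_le_eq)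
    thus ?thesis by simp
  qed
  have "(\<Sum>c\<in>X. (ln (real (q div conductor q c)))^2) = (\<Sum>c\<in>X. \<Sum>a\<in>PP q. \<Sum>b\<in>PP q. f c a * f c b)"
    by (intro sum.cong refl) (simp add: lnc power2_eq_square sum_product)
  also have "\<dots> = (\<Sum>a\<in>PP q. \<Sum>c\<in>X. \<Sum>b\<in>PP q. f c a * f c b)" by (rule sum.swap)
  also have "\<dots> = (\<Sum>a\<in>PP q. \<Sum>b\<in>PP q. \<Sum>c\<in>X. f c a * f c b)" by (intro sum.cong refl sum.swap)
  also have "\<dots> \<le> (\<Sum>a\<in>PP q. \<Sum>b\<in>PP q. ln (real (fst a)) * ln (real (fst b)) * (real (totient q) * uu a b))"
  proof (intro sum_mono)
    fix a b assume a: "a \<in> PP q" and b: "b \<in> PP q"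
    define S where "S = {c \<in> X. fst a ^ snd a dvd q div conductor q c \<and> fst b ^ snd b dvd q div conductor q c}"
    have "(\<Sum>c\<in>X. f c a * f c b) = (\<Sum>c\<in>X. if c \<in> S then ln (real (fst a)) * ln (real (fst b)) else 0)"
      unfolding f_def S_def by (intro sum.cong refl) auto
    also have "\<dots> = (\<Sum>c\<in>S. ln (real (fst a)) * ln (real (fst b)))"
      using finX unfolding S_def by (simp add: sum.inter_filter[symmetric])
    also have "\<dots> = ln (real (fst a)) * ln (real (fst b)) * real (card S)" by simp
    also have "\<dots> \<le> ln (real (fst a)) * ln (real (fst b)) * (real (totient q) * uu a b)"
      using pair_count[OF q a b] lnpos[OF a] lnpos[OF b] unfolding S_def X_def
      by (intro mult_left_mono) auto
    finally show "(\<Sum>c\<in>X. f c a * f c b) \<le> ln (real (fst a)) * ln (real (fst b)) * (real (totient q) * uu a b)" .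
  qed
  also have "\<dots> = real (totient q) * (\<Sum>a\<in>PP q. \<Sum>b\<in>PP q. ln (real (fst a)) * ln (real (fst b)) * uu a b)"
    by (simp add: sum_distrib_left mult_ac)
  finally show ?thesis unfolding X_def .
qed

lemma geo_bound: fixes x :: real assumes "0 \<le> x" "x < 1" shows "(\<Sum>i=1..M. x^i) \<le> x / (1 - x)"
proof -
  have "(\<Sum>i=1..M. x^i) = (if M < 1 then 0 else (x - x^Suc M) / (1 - x))"
    using assms by (subst sum_gp) auto
  also have "\<dots> \<le> x / (1 - x)" using assms by (auto intro!: divide_right_mono divide_nonneg_nonneg)
  finally show ?thesis .
qed

lemma inv_pow_max_bound:
  fixes p :: nat assumes p: "p \<ge> 2" and ij: "i \<ge> 1" "j \<ge> 1"
  shows "1 / real p ^ max i j \<le> (1 / real p) * ((3/4) ^ (i - 1) * (3/4) ^ (j - 1))"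
proof -
  define k where "k = max i j"
  have k1: "k \<ge> 1" using ij unfolding k_def by simp
  have "(4/3::real) ^ (i - 1) * (4/3) ^ (j - 1) = (4/3) ^ (i - 1 + (j - 1))" by (simp add: power_add)
  also have "\<dots> \<le> (4/3) ^ (2 * (k - 1))" unfolding k_def by (intro power_increasing) auto
  also have "\<dots> = (16/9) ^ (k - 1)" by (simp add: power_mult power2_eq_square)
  also have "\<dots> \<le> 2 ^ (k - 1)" by (intro power_mono) auto
  also have "\<dots> \<le> real p ^ (k - 1)" using p by (intro power_mono) auto
  finally have A: "(4/3::real) ^ (i - 1) * (4/3) ^ (j - 1) \<le> real p ^ (k - 1)" .
  have pk: "real p ^ k = real p * real p ^ (k - 1)" using k1 by (metis Suc_diff_1 less_le_trans power_Suc zero_less_one)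
  have pos: "real p ^ (k - 1) > 0" using p by simp
  have e1: "1 / real p ^ k = (1 / real p) * (1 / real p ^ (k - 1))" unfolding pk by simp
  have "1 / real p ^ (k - 1) \<le> 1 / ((4/3) ^ (i - 1) * (4/3) ^ (j - 1))"
    using A pos by (intro divide_left_mono mult_pos_pos) auto
  also have "1 / ((4/3::real) ^ (i - 1) * (4/3) ^ (j - 1)) = (3/4) ^ (i - 1) * (3/4) ^ (j - 1)"
    by (simp add: power_divide)
  finally have B: "1 / real p ^ (k - 1) \<le> (3/4) ^ (i - 1) * (3/4) ^ (j - 1)" .
  have "1 / real p ^ k \<le> (1 / real p) * ((3/4) ^ (i - 1) * (3/4) ^ (j - 1))"
    unfolding e1 using B p by (intro mult_left_mono) auto
  thus ?thesis unfolding k_def .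
qed

lemma pair_sum_bound:
  assumes q: "q \<ge> 2"
  shows "(\<Sum>a\<in>PP q. \<Sum>b\<in>PP q. ln (real (fst a)) * ln (real (fst b)) * uu a b)
    \<le> 16 * (\<Sum>p\<in>prime_factors q. ln (real p) / real p)^2 + 32 * (\<Sum>p\<in>prime_factors q. ln (real p)^2 / real p)"
proof -
  define w where "w a = ln (real (fst a))" for a :: "nat \<times> nat"
  define u1 where "u1 a b = 4 / (real (fst a) ^ snd a * real (fst b) ^ snd b)" for a b :: "nat \<times> nat"
  define u2 where "u2 a b = (if fst a = fst b then 2 / real (fst a) ^ (max (snd a) (snd b)) else 0)" for a b :: "nat \<times> nat"
  define M where "M p = multiplicity p q" for p
  have PPi: "prime (fst a)" "snd a \<ge> 1" if "a \<in> PP q" for a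
    using that unfolding PP_def by (auto simp: in_prime_factors_iff)
  have wpos: "w a \<ge> 0" if "a \<in> PP q" for a
  proof -
    have "real (fst a) \<ge> 1" using PPi[OF that] prime_gt_0_nat by (simp add: Suc_le_eq)
    thus ?thesis unfolding w_def by simp
  qed
  have ppos: "real (fst a) > 0" if "a \<in> PP q" for a using PPi[OF that] prime_gt_0_nat by simp
  have T1: "(\<Sum>a\<in>PP q. \<Sum>b\<in>PP q. w a * w b * uu a b) \<le> (\<Sum>a\<in>PP q. \<Sum>b\<in>PP q. w a * w b * (u1 a b + u2 a b))"
  proof (intro sum_mono mult_left_mono)
    fix a b assume a: "a \<in> PP q" and b: "b \<in> PP q"
    show "0 \<le> w a * w b" using wpos[OF a] wpos[OF b] by simp
    have "u1 a b \<ge> 0" unfolding u1_def using ppos[OF a] ppos[OF b] by simp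
    moreover have "u2 a b \<ge> 0" unfolding u2_def using ppos[OF a] by simp
    ultimately show "uu a b \<le> u1 a b + u2 a b" unfolding uu_def u1_def u2_def by auto
  qed
  have T2: "(\<Sum>a\<in>PP q. \<Sum>b\<in>PP q. w a * w b * (u1 a b + u2 a b)) = (\<Sum>a\<in>PP q. \<Sum>b\<in>PP q. w a * w b * u1 a b) + (\<Sum>a\<in>PP q. \<Sum>b\<in>PP q. w a * w b * u2 a b)"
    by (simp add: distrib_left sum.distrib)
  have T3: "(\<Sum>a\<in>PP q. \<Sum>b\<in>PP q. w a * w b * u1 a b) = 4 * (\<Sum>a\<in>PP q. w a / real (fst a) ^ snd a)^2"
    unfolding u1_def power2_eq_square by (simp add: sum_product sum_distrib_left mult_ac)
  have "(\<Sum>a\<in>PP q. w a / real (fst a) ^ snd a) \<le> 2 * (\<Sum>p\<in>prime_factors q. ln (real p) / real p)"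
  proof -
    have "(\<Sum>a\<in>PP q. w a / real (fst a) ^ snd a) = (\<Sum>p\<in>prime_factors q. \<Sum>i\<in>{1..M p}. ln (real p) * (1 / real p) ^ i)"
      unfolding PP_def M_def w_def by (subst sum.Sigma) (auto simp: power_divide case_prod_beta)
    also have "\<dots> \<le> (\<Sum>p\<in>prime_factors q. ln (real p) * (2 / real p))"
    proof (intro sum_mono)
      fix p assume p: "p \<in> prime_factors q"
      have p2: "real p \<ge> 2" using p by (auto simp: in_prime_factors_iff dest: prime_ge_2_nat)
      have "(\<Sum>i=1..M p. (1 / real p) ^ i) \<le> (1 / real p) / (1 - 1 / real p)"
        using p2 by (intro geo_bound) auto
      also have "\<dots> \<le> 2 / real p" using p2 by (simp add: field_simps)
      finally have g: "(\<Sum>i=1..M p. (1 / real p) ^ i) \<le> 2 / real p" .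
      have "ln (real p) \<ge> 0" using p2 by simp
      hence "ln (real p) * (\<Sum>i=1..M p. (1 / real p) ^ i) \<le> ln (real p) * (2 / real p)"
        using g by (rule mult_left_mono[rotated])
      thus "(\<Sum>i\<in>{1..M p}. ln (real p) * (1 / real p) ^ i) \<le> ln (real p) * (2 / real p)"
        by (simp only: sum_distrib_left)
    qed
    also have "\<dots> = 2 * (\<Sum>p\<in>prime_factors q. ln (real p) / real p)" by (simp add: sum_distrib_left mult_ac)
    finally show ?thesis .
  qed
  hence "4 * (\<Sum>a\<in>PP q. w a / real (fst a) ^ snd a)^2 \<le> 4 * (2 * (\<Sum>p\<in>prime_factors q. ln (real p) / real p))^2"
    using wpos ppos by (intro mult_left_mono power_mono sum_nonneg divide_nonneg_nonneg) auto
  also have "\<dots> = 16 * (\<Sum>p\<in>prime_factors q. ln (real p) / real p)^2" by (simp add: power2_eq_square)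
  finally have P1: "4 * (\<Sum>a\<in>PP q. w a / real (fst a) ^ snd a)^2 \<le> 16 * (\<Sum>p\<in>prime_factors q. ln (real p) / real p)^2" .
  have P2: "(\<Sum>a\<in>PP q. \<Sum>b\<in>PP q. w a * w b * u2 a b) \<le> 32 * (\<Sum>p\<in>prime_factors q. ln (real p)^2 / real p)"
  proof -
    have inner: "(\<Sum>b\<in>PP q. w a * w b * u2 a b) = (\<Sum>j\<in>{1..M (fst a)}. ln (real (fst a))^2 * (2 / real (fst a) ^ max (snd a) j))"
      if a: "a \<in> PP q" for a
    proof -
      have fa: "fst a \<in> prime_factors q" using a unfolding PP_def by auto
      have "(\<Sum>b\<in>PP q. w a * w b * u2 a b) = (\<Sum>p'\<in>prime_factors q. \<Sum>j\<in>{1..M p'}. w a * w (p',j) * u2 a (p',j))"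
        unfolding PP_def M_def by (subst sum.Sigma) (auto simp: case_prod_beta)
      also have "\<dots> = (\<Sum>p'\<in>prime_factors q. if p' = fst a then (\<Sum>j\<in>{1..M (fst a)}. ln (real (fst a))^2 * (2 / real (fst a) ^ max (snd a) j)) else 0)"
        by (intro sum.cong refl) (auto simp: u2_def w_def power2_eq_square)
      also have "\<dots> = (\<Sum>j\<in>{1..M (fst a)}. ln (real (fst a))^2 * (2 / real (fst a) ^ max (snd a) j))"
        using fa by (subst sum.delta) auto
      finally show ?thesis .
    qed
    have "(\<Sum>a\<in>PP q. \<Sum>b\<in>PP q. w a * w b * u2 a b) = (\<Sum>a\<in>PP q. \<Sum>j\<in>{1..M (fst a)}. ln (real (fst a))^2 * (2 / real (fst a) ^ max (snd a) j))"
      using inner by (rule sum.cong[OF refl])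
    also have "\<dots> = (\<Sum>p\<in>prime_factors q. \<Sum>i\<in>{1..M p}. \<Sum>j\<in>{1..M p}. ln (real p)^2 * (2 / real p ^ max i j))"
      unfolding PP_def M_def by (subst sum.Sigma) (auto simp: case_prod_beta)
    also have "\<dots> \<le> (\<Sum>p\<in>prime_factors q. \<Sum>i\<in>{1..M p}. \<Sum>j\<in>{1..M p}. ln (real p)^2 * 2 * ((1 / real p) * ((3/4) ^ (i - 1) * (3/4) ^ (j - 1))))"
    proof (intro sum_mono)
      fix p i j assume p: "p \<in> prime_factors q" and i: "i \<in> {1..M p}" and j: "j \<in> {1..M p}"
      have p2: "p \<ge> 2" using p by (auto simp: in_prime_factors_iff dest: prime_ge_2_nat)
      have "1 / real p ^ max i j \<le> (1 / real p) * ((3/4) ^ (i - 1) * (3/4) ^ (j - 1))"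
        using inv_pow_max_bound[OF p2] i j by auto
      hence "ln (real p)^2 * 2 * (1 / real p ^ max i j) \<le> ln (real p)^2 * 2 * ((1 / real p) * ((3/4) ^ (i - 1) * (3/4) ^ (j - 1)))"
        by (intro mult_left_mono) auto
      thus "ln (real p)^2 * (2 / real p ^ max i j) \<le> ln (real p)^2 * 2 * ((1 / real p) * ((3/4) ^ (i - 1) * (3/4) ^ (j - 1)))"
        by simp
    qed
    also have "\<dots> = (\<Sum>p\<in>prime_factors q. ln (real p)^2 * 2 * (1 / real p) * (\<Sum>i\<in>{1..M p}. (3/4::real) ^ (i - 1))^2)"
      by (simp add: power2_eq_square sum_product sum_distrib_left mult_ac)
    also have "\<dots> \<le> (\<Sum>p\<in>prime_factors q. ln (real p)^2 * 2 * (1 / real p) * 16)"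
    proof (intro sum_mono mult_left_mono)
      fix p assume p: "p \<in> prime_factors q"
      have "(\<Sum>i\<in>{1..M p}. (3/4::real) ^ (i - 1)) = (4/3) * (\<Sum>i=1..M p. (3/4::real) ^ i)"
        by (simp add: sum_distrib_left) (intro sum.cong refl, auto simp: power_eq_if)
      also have "\<dots> \<le> (4/3) * ((3/4) / (1 - 3/4))" by (intro mult_left_mono geo_bound) auto
      finally have "(\<Sum>i\<in>{1..M p}. (3/4::real) ^ (i - 1)) \<le> 4" by simp
      moreover have "(\<Sum>i\<in>{1..M p}. (3/4::real) ^ (i - 1)) \<ge> 0" by (intro sum_nonneg) auto
      ultimately show "(\<Sum>i\<in>{1..M p}. (3/4::real) ^ (i - 1))^2 \<le> 16"
        using power_mono[of _ 4 2] by fastforce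
      show "0 \<le> ln (real p)^2 * 2 * (1 / real p)" by simp
    qed
    also have "\<dots> = 32 * (\<Sum>p\<in>prime_factors q. ln (real p)^2 / real p)" by (simp add: sum_distrib_left)
    finally show ?thesis .
  qed
  have "(\<Sum>a\<in>PP q. \<Sum>b\<in>PP q. w a * w b * uu a b)
    \<le> 16 * (\<Sum>p\<in>prime_factors q. ln (real p) / real p)^2 + 32 * (\<Sum>p\<in>prime_factors q. ln (real p)^2 / real p)"
    using T1 T2 T3 P1 P2 by linarith
  thus ?thesis unfolding w_def .
qed



lemma prod_pf_le: fixes n :: nat assumes "n > 0" shows "(\<Prod>p\<in>prime_factors n. p) \<le> n"
proof -
  have "(\<Prod>p\<in>prime_factors n. p) dvd (\<Prod>p\<in>prime_factors n. p ^ multiplicity p n)"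
    by (intro prod_dvd_prod dvd_power) (auto simp: prime_factors_multiplicity)
  also have "\<dots> = n" using prime_factorization_nat[OF assms] by simp
  finally show ?thesis using assms by (intro dvd_imp_le) auto
qed

lemma sum_ln_pf: fixes n :: nat assumes "n > 0" shows "(\<Sum>p\<in>prime_factors n. ln (real p)) \<le> ln (real n)"
proof -
  have pos: "\<And>p. p \<in> prime_factors n \<Longrightarrow> real p > 0" by (auto simp: in_prime_factors_iff prime_gt_0_nat)
  have "(\<Sum>p\<in>prime_factors n. ln (real p)) = ln (\<Prod>p\<in>prime_factors n. real p)"
    using pos by (subst ln_prod) auto
  also have "(\<Prod>p\<in>prime_factors n. real p) = real (\<Prod>p\<in>prime_factors n. p)" by simp
  also have "ln \<dots> \<le> ln (real n)"
  proof -
    have le: "real (\<Prod>p\<in>prime_factors n. p) \<le> real n" using prod_pf_le[OF assms] by (simp only: of_nat_le_iff)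
    have "(\<Prod>p\<in>prime_factors n. p) > 0" by (intro prod_pos) (auto simp: in_prime_factors_iff prime_gt_0_nat)
    hence "real (\<Prod>p\<in>prime_factors n. p) > 0" by (simp only: of_nat_0_less_iff)
    thus ?thesis using le by (simp only: ln_le_cancel_iff)
  qed
  finally show ?thesis .
qed

lemma mertens_light:
  assumes N: "N \<ge> 1"
  shows "(\<Sum>p\<in>{p. prime p \<and> p \<le> N}. ln (real p) / real p) \<le> 2 * ln (real N)"
proof -
  define Pr where "Pr = {p. prime p \<and> p \<le> N}"
  have finPr: "finite Pr" unfolding Pr_def by (rule finite_subset[of _ "{..N}"]) auto
  have cPr: "card Pr \<le> N"
  proof -
    have "Pr \<subseteq> {1..N}" unfolding Pr_def by (auto dest: prime_gt_0_nat simp: Suc_le_eq)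
    hence "card Pr \<le> card {1..N}" by (intro card_mono) auto
    thus ?thesis by simp
  qed
  have lnN: "ln (real N) \<ge> 0" using N by simp
  have lnp: "0 \<le> ln (real p)" "ln (real p) \<le> ln (real N)" if "p \<in> Pr" for p
    using that unfolding Pr_def by (auto dest: prime_gt_0_nat simp: Suc_le_eq)
  define cnt where "cnt p = card {k\<in>{1..N}. p dvd k}" for p
  have A: "(\<Sum>k\<in>{1..N}. \<Sum>p\<in>Pr. if p dvd k then ln (real p) else 0) \<le> real N * ln (real N)"
  proof -
    have "(\<Sum>k\<in>{1..N}. \<Sum>p\<in>Pr. if p dvd k then ln (real p) else 0) \<le> (\<Sum>k\<in>{1..N}. ln (real N))"
    proof (intro sum_mono)
      fix k assume k: "k \<in> {1..N}"
      have "{p \<in> Pr. p dvd k} = prime_factors k"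
      proof -
        have "x \<le> N" if "x dvd k" for x using dvd_imp_le[OF that] k by auto
        thus ?thesis using k unfolding Pr_def by (auto simp: in_prime_factors_iff)
      qed
      hence "(\<Sum>p\<in>Pr. if p dvd k then ln (real p) else 0) = (\<Sum>p\<in>prime_factors k. ln (real p))"
        using finPr by (simp add: sum.inter_filter[symmetric])
      also have "\<dots> \<le> ln (real k)" using k by (intro sum_ln_pf) auto
      also have "\<dots> \<le> ln (real N)" using k by auto
      finally show "(\<Sum>p\<in>Pr. if p dvd k then ln (real p) else 0) \<le> ln (real N)" .
    qed
    thus ?thesis by simp
  qed
  have B: "(\<Sum>k\<in>{1..N}. \<Sum>p\<in>Pr. if p dvd k then ln (real p) else 0) = (\<Sum>p\<in>Pr. ln (real p) * real (cnt p))"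
  proof -
    have "(\<Sum>k\<in>{1..N}. \<Sum>p\<in>Pr. if p dvd k then ln (real p) else 0) = (\<Sum>p\<in>Pr. \<Sum>k\<in>{1..N}. if p dvd k then ln (real p) else 0)"
      by (rule sum.swap)
    also have "\<dots> = (\<Sum>p\<in>Pr. ln (real p) * real (cnt p))"
      unfolding cnt_def by (intro sum.cong refl) (simp add: sum.inter_filter[symmetric])
    finally show ?thesis .
  qed
  have cntge: "real (cnt p) \<ge> real N / real p - 1" if "p \<in> Pr" for p
  proof -
    have p0: "p > 0" using that unfolding Pr_def by (auto simp: prime_gt_0_nat)
    have sub: "(\<lambda>j. p * j) ` {1..N div p} \<subseteq> {k\<in>{1..N}. p dvd k}"
    proof
      fix x assume "x \<in> (\<lambda>j. p * j) ` {1..N div p}"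
      then obtain j where j: "j \<in> {1..N div p}" "x = p * j" by auto
      have "p * j \<le> p * (N div p)" using j by simp
      also have "\<dots> \<le> N" by simp
      finally show "x \<in> {k\<in>{1..N}. p dvd k}" using j p0 by auto
    qed
    have inj: "inj_on (\<lambda>j. p * j) {1..N div p}" using p0 by (intro inj_onI) auto
    have "card ((\<lambda>j. p * j) ` {1..N div p}) = card {1..N div p}" by (rule card_image[OF inj])
    moreover have "card ((\<lambda>j. p * j) ` {1..N div p}) \<le> cnt p" unfolding cnt_def
      by (rule card_mono[OF _ sub]) simp
    ultimately have "card {1..N div p} \<le> cnt p" by simp
    hence c1: "N div p \<le> cnt p" by simp
    have e: "p * (N div p) + N mod p = N" by (rule mult_div_mod_eq)
    have "real (p * (N div p) + N mod p) = real N" by (simp only: e)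
    hence "real p * real (N div p) + real (N mod p) = real N" by (simp only: of_nat_add of_nat_mult)
    hence "real N = real p * real (N div p) + real (N mod p)" by (rule sym)
    moreover have "real (N mod p) < real p" using p0 by simp
    ultimately have "real N / real p < real (N div p) + 1" using p0 by (simp add: field_simps)
    thus ?thesis using c1 by linarith
  qed
  have "(\<Sum>p\<in>Pr. ln (real p) * (real N / real p - 1)) \<le> (\<Sum>p\<in>Pr. ln (real p) * real (cnt p))"
    using cntge lnp by (intro sum_mono mult_left_mono) auto
  hence C: "(\<Sum>p\<in>Pr. ln (real p) * (real N / real p - 1)) \<le> real N * ln (real N)" using A B by linarith
  have D: "(\<Sum>p\<in>Pr. ln (real p)) \<le> real N * ln (real N)"
  proof -
    have "(\<Sum>p\<in>Pr. ln (real p)) \<le> (\<Sum>p\<in>Pr. ln (real N))" using lnp by (intro sum_mono) auto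
    also have "\<dots> = real (card Pr) * ln (real N)" by simp
    also have "\<dots> \<le> real N * ln (real N)" using cPr lnN by (intro mult_right_mono) auto
    finally show ?thesis .
  qed
  have "real N * (\<Sum>p\<in>Pr. ln (real p) / real p) = (\<Sum>p\<in>Pr. ln (real p) * (real N / real p - 1)) + (\<Sum>p\<in>Pr. ln (real p))"
    by (simp add: sum_distrib_left sum.distrib[symmetric] algebra_simps)
  also have "\<dots> \<le> real N * (2 * ln (real N))" using C D by linarith
  finally have "real N * (\<Sum>p\<in>Pr. ln (real p) / real p) \<le> real N * (2 * ln (real N))" .
  thus ?thesis unfolding Pr_def using N by (simp add: mult_le_cancel_left)
qed

lemma S_bounds:
  fixes q :: nat
  assumes q: "q \<ge> 2"
  defines "y \<equiv> max 8 (ln (real q))"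
  shows "(\<Sum>p\<in>prime_factors q. ln (real p) / real p) \<le> 2 * ln y + 1"
    and "(\<Sum>p\<in>prime_factors q. ln (real p)^2 / real p) \<le> 2 * (ln y)^2 + ln y"
proof -
  have y8: "y \<ge> 8" unfolding y_def by simp
  have yq: "ln (real q) \<le> y" unfolding y_def by simp
  have e8: "exp 1 \<le> y" using e_less_272 y8 by linarith
  define N where "N = nat \<lfloor>y\<rfloor>"
  have N1: "N \<ge> 1" using y8 unfolding N_def by linarith
  have Ny: "real N \<le> y" using y8 unfolding N_def by linarith
  have pN: "real p \<le> y \<longleftrightarrow> p \<le> N" for p :: nat using y8 unfolding N_def by linarith
  define Pf where "Pf = prime_factors q"
  have finPf: "finite Pf" unfolding Pf_def by simp
  have Pfp: "prime p" "real p \<ge> 2" if "p \<in> Pf" for p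
    using that unfolding Pf_def by (auto simp: in_prime_factors_iff dest: prime_ge_2_nat)
  have lnpos: "ln (real p) \<ge> 0" if "p \<in> Pf" for p using Pfp[OF that] by simp
  define Sm where "Sm = {p \<in> Pf. real p \<le> y}"
  define Lg where "Lg = {p \<in> Pf. \<not> real p \<le> y}"
  have finSm: "finite Sm" "finite Lg" unfolding Sm_def Lg_def using finPf by auto
  have PfU: "Pf = Sm \<union> Lg" "Sm \<inter> Lg = {}" unfolding Sm_def Lg_def by auto
  have split: "(\<Sum>p\<in>Pf. f p) = (\<Sum>p\<in>Sm. f p) + (\<Sum>p\<in>Lg. f p)" for f :: "nat \<Rightarrow> real"
    unfolding PfU(1) using finSm PfU(2) by (rule sum.union_disjoint)
  have sumln: "(\<Sum>p\<in>Lg. ln (real p)) \<le> ln (real q)"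
  proof -
    have "(\<Sum>p\<in>Lg. ln (real p)) \<le> (\<Sum>p\<in>Pf. ln (real p))"
      using finPf lnpos unfolding Lg_def by (intro sum_mono2) auto
    also have "\<dots> \<le> ln (real q)" unfolding Pf_def using q by (intro sum_ln_pf) auto
    finally show ?thesis .
  qed
  have small: "(\<Sum>p\<in>Sm. ln (real p) / real p) \<le> 2 * ln y"
  proof -
    have "(\<Sum>p\<in>Sm. ln (real p) / real p) \<le> (\<Sum>p\<in>{p. prime p \<and> p \<le> N}. ln (real p) / real p)"
    proof (rule sum_mono2)
      show "finite {p. prime p \<and> p \<le> N}" by (rule finite_subset[of _ "{..N}"]) auto
      show "Sm \<subseteq> {p. prime p \<and> p \<le> N}" unfolding Sm_def using Pfp pN by auto
      fix b assume "b \<in> {p. prime p \<and> p \<le> N} - Sm"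
      hence "real b \<ge> 1" by (auto dest: prime_gt_0_nat simp: Suc_le_eq)
      thus "0 \<le> ln (real b) / real b" by simp
    qed
    also have "\<dots> \<le> 2 * ln (real N)" by (rule mertens_light[OF N1])
    also have "\<dots> \<le> 2 * ln y" using Ny N1 by simp
    finally show ?thesis .
  qed
  have large1: "(\<Sum>p\<in>Lg. ln (real p) / real p) \<le> 1"
  proof -
    have "(\<Sum>p\<in>Lg. ln (real p) / real p) \<le> (\<Sum>p\<in>Lg. ln (real p) / y)"
    proof (intro sum_mono)
      fix p assume "p \<in> Lg"
      hence "p \<in> Pf" "real p > y" unfolding Lg_def by auto
      thus "ln (real p) / real p \<le> ln (real p) / y" using lnpos y8 by (intro divide_left_mono) auto
    qed
    also have "\<dots> = (\<Sum>p\<in>Lg. ln (real p)) / y" by (simp add: sum_divide_distrib)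
    also have "\<dots> \<le> ln (real q) / y" using sumln y8 by (intro divide_right_mono) auto
    also have "\<dots> \<le> 1" using yq y8 by simp
    finally show ?thesis .
  qed
  show "(\<Sum>p\<in>prime_factors q. ln (real p) / real p) \<le> 2 * ln y + 1"
    using split[of "\<lambda>p. ln (real p) / real p"] small large1 unfolding Pf_def by linarith
  have small2: "(\<Sum>p\<in>Sm. ln (real p)^2 / real p) \<le> 2 * (ln y)^2"
  proof -
    have "(\<Sum>p\<in>Sm. ln (real p)^2 / real p) \<le> (\<Sum>p\<in>Sm. ln y * (ln (real p) / real p))"
    proof (intro sum_mono)
      fix p assume "p \<in> Sm"
      hence p: "p \<in> Pf" "real p \<le> y" unfolding Sm_def by auto
      have "ln (real p) \<le> ln y" using p Pfp[OF p(1)] by simp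
      hence "ln (real p) * (ln (real p) / real p) \<le> ln y * (ln (real p) / real p)"
        using lnpos[OF p(1)] Pfp[OF p(1)] by (intro mult_right_mono) auto
      thus "ln (real p)^2 / real p \<le> ln y * (ln (real p) / real p)" by (simp add: power2_eq_square)
    qed
    also have "\<dots> = ln y * (\<Sum>p\<in>Sm. ln (real p) / real p)" by (simp add: sum_distrib_left)
    also have "\<dots> \<le> ln y * (2 * ln y)" using small y8 by (intro mult_left_mono) auto
    finally show ?thesis by (simp add: power2_eq_square)
  qed
  have large2: "(\<Sum>p\<in>Lg. ln (real p)^2 / real p) \<le> ln y"
  proof -
    have "(\<Sum>p\<in>Lg. ln (real p)^2 / real p) \<le> (\<Sum>p\<in>Lg. ln (real p) * (ln y / y))"
    proof (intro sum_mono)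
      fix p assume "p \<in> Lg"
      hence p: "p \<in> Pf" "real p > y" unfolding Lg_def by auto
      have "ln (real p) / real p \<le> ln y / y" using ln_x_over_x_mono[OF e8] p by simp
      hence "ln (real p) * (ln (real p) / real p) \<le> ln (real p) * (ln y / y)"
        using lnpos[OF p(1)] by (intro mult_left_mono) auto
      thus "ln (real p)^2 / real p \<le> ln (real p) * (ln y / y)" by (simp add: power2_eq_square)
    qed
    also have "\<dots> = (\<Sum>p\<in>Lg. ln (real p)) * (ln y / y)" by (rule sum_distrib_right[symmetric])
    also have "\<dots> \<le> ln (real q) * (ln y / y)" using sumln y8 by (intro mult_right_mono) auto
    also have "\<dots> \<le> y * (ln y / y)" using yq y8 by (intro mult_right_mono) auto
    also have "\<dots> = ln y" using y8 by simp
    finally show ?thesis .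
  qed
  show "(\<Sum>p\<in>prime_factors q. ln (real p)^2 / real p) \<le> 2 * (ln y)^2 + ln y"
    using split[of "\<lambda>p. ln (real p)^2 / real p"] small2 large2 unfolding Pf_def by linarith
qed



lemma ln_ge_one_minus_inv: fixes x :: real assumes "x > 0" shows "ln x \<ge> 1 - 1 / x"
proof -
  have "ln (inverse x) \<le> inverse x - 1" using assms by (intro ln_le_minus_one) simp
  thus ?thesis by (simp add: ln_inverse divide_inverse)
qed

lemma M_le_L:
  fixes q :: nat assumes q: "q \<ge> 3"
  shows "ln (max 8 (ln (real q))) \<le> 36 * ln (ln (real q))" "ln (max 8 (ln (real q))) \<ge> 1"
    "ln (ln (real q)) > 0"
proof -
  have l3: "ln (real q) \<ge> ln 3" using q by simp
  have a: "ln (272/100::real) > 1" by (rule ln_272_gt_1)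
  have b: "ln (300/272::real) \<ge> 1 - 272/300" using ln_ge_one_minus_inv[of "300/272"] by simp
  have "ln (3::real) = ln ((272/100) * (300/272))" by simp
  also have "\<dots> = ln (272/100) + ln (300/272)" by (rule ln_mult_pos) auto
  finally have ln3: "ln (3::real) \<ge> 328/300" using a b by simp
  hence lq: "ln (real q) \<ge> 328/300" using l3 by simp
  have LL: "ln (ln (real q)) \<ge> 28/328"
  proof -
    have "ln (ln (real q)) \<ge> 1 - 1 / ln (real q)" using lq by (intro ln_ge_one_minus_inv) simp
    moreover have "1 / ln (real q) \<le> 300/328" using lq by (simp add: field_simps)
    ultimately show ?thesis by simp
  qed
  show "ln (ln (real q)) > 0" using LL by simp
  have e8: "exp 1 \<le> (8::real)" using e_less_272 by simp
  show "ln (max 8 (ln (real q))) \<ge> 1"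
  proof -
    have "ln (exp 1) \<le> ln (max 8 (ln (real q)))" using e8 by (subst ln_le_cancel_iff) auto
    thus ?thesis by simp
  qed
  show "ln (max 8 (ln (real q))) \<le> 36 * ln (ln (real q))"
  proof (cases "ln (real q) \<le> 8")
    case True
    have "ln (8::real) = 3 * ln 2" using ln_realpow[of 2 3] by simp
    hence "ln (8::real) \<le> 3" using ln_2_less_1 by simp
    moreover have "max 8 (ln (real q)) = 8" using True by simp
    ultimately show ?thesis using LL by simp
  next
    case False
    hence "max 8 (ln (real q)) = ln (real q)" by simp
    thus ?thesis using LL by simp
  qed
qed

lemma B_bound:
  fixes q :: nat assumes q: "q \<ge> 3"
  shows "16 * (\<Sum>p\<in>prime_factors q. ln (real p) / real p)^2 + 32 * (\<Sum>p\<in>prime_factors q. ln (real p)^2 / real p)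
         \<le> 311040 * (ln (ln (real q)))^2"
proof -
  define M where "M = ln (max 8 (ln (real q)))"
  define L where "L = ln (ln (real q))"
  define S1 where "S1 = (\<Sum>p\<in>prime_factors q. ln (real p) / real p)"
  define S2 where "S2 = (\<Sum>p\<in>prime_factors q. ln (real p)^2 / real p)"
  have q2: "q \<ge> 2" using q by simp
  have h1: "S1 \<le> 2 * M + 1" "S2 \<le> 2 * M^2 + M" using S_bounds[OF q2] unfolding S1_def S2_def M_def by auto
  have h2: "M \<le> 36 * L" "M \<ge> 1" "L > 0" using M_le_L[OF q] unfolding M_def L_def by auto
  have S1pos: "S1 \<ge> 0" unfolding S1_def
    by (intro sum_nonneg) (auto simp: in_prime_factors_iff dest: prime_gt_0_nat)
  have "S1 \<le> 3 * M" using h1 h2 by simp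
  hence "S1^2 \<le> (3 * M)^2" using S1pos by (intro power_mono) auto
  hence A: "S1^2 \<le> 9 * M^2" by (simp add: power_mult_distrib)
  have "M \<le> M^2" using h2 by (simp add: power2_eq_square)
  hence B: "S2 \<le> 3 * M^2" using h1 by simp
  have "M^2 \<le> (36 * L)^2" using h2 by (intro power_mono) auto
  hence C: "M^2 \<le> 1296 * L^2" by (simp add: power_mult_distrib)
  have "16 * S1^2 + 32 * S2 \<le> 311040 * L^2" using A B C by linarith
  thus ?thesis unfolding S1_def S2_def L_def .
qed

lemma main_count:
  fixes q :: nat assumes q: "q \<ge> 3"
  shows "(\<Sum>c\<in>dirichlet_chars q. (ln (real (q div conductor q c)))^2) \<le> real (totient q) * (311040 * (ln (ln (real q)))^2)"
proof -
  have q2: "q \<ge> 2" using q by simp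
  have "(\<Sum>c\<in>dirichlet_chars q. (ln (real (q div conductor q c)))^2)
     \<le> real (totient q) * (\<Sum>a\<in>PP q. \<Sum>b\<in>PP q. ln (real (fst a)) * ln (real (fst b)) * uu a b)"
    by (rule moment[OF q2])
  also have "\<dots> \<le> real (totient q) * (16 * (\<Sum>p\<in>prime_factors q. ln (real p) / real p)^2 + 32 * (\<Sum>p\<in>prime_factors q. ln (real p)^2 / real p))"
    by (intro mult_left_mono pair_sum_bound[OF q2]) auto
  also have "\<dots> \<le> real (totient q) * (311040 * (ln (ln (real q)))^2)"
    by (intro mult_left_mono B_bound[OF q]) auto
  finally show ?thesis .
qed

theorem lemma3p2:
  shows "\<exists>C>0. \<forall>w :: nat \<Rightarrow> real.
           (\<forall>q. w q > 0) \<longrightarrow> (w \<longlonglongrightarrow> 0) \<longrightarrow>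
           (\<forall>q\<ge>3. \<exists>F \<subseteq> dirichlet_chars q.
              (\<forall>c. c \<in> F \<longleftrightarrow> (\<lambda>n. cnj (c n)) \<in> F) \<and>
              real (card F) \<ge> real (totient q) * (1 - C * (w q)\<^sup>2) \<and>
              (\<forall>c\<in>F. \<bar>ln (real (conductor q c)) - ln (real q)\<bar>
                        \<le> C * ln (ln (real q)) / w q))"
proof (intro exI[of _ "70::real"] conjI allI impI)
  show "(0::real) < 70" by simp
  fix w :: "nat \<Rightarrow> real" and q :: nat
  assume wpos: "\<forall>q. w q > 0" and "w \<longlonglongrightarrow> 0" and q: "q \<ge> 3"
  have q2: "q \<ge> 2" using q by simp
  define L where "L = ln (ln (real q))"
  have L0: "L > 0" using M_le_L(3)[OF q] unfolding L_def .
  have w0: "w q > 0" using wpos by simp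
  define T where "T = 70 * L / w q"
  have T0: "T > 0" unfolding T_def using L0 w0 by simp
  define X where "X = dirichlet_chars q"
  define e where "e c = ln (real (q div conductor q c))" for c
  define F where "F = {c \<in> X. e c \<le> T}"
  have finX: "finite X" and cX: "card X = totient q" using chars_card[OF q2] unfolding X_def by auto
  have conjconj: "(\<lambda>n. cnj (cnj (c n))) = c" for c :: "nat \<Rightarrow> complex" by simp
  have lnq: "e c = ln (real q) - ln (real (conductor q c))" and condle: "conductor q c \<le> q"
    if "c \<in> X" for c
  proof -
    have cp: "conductor q c > 0" "conductor q c dvd q" using conductor_props[OF q2] that unfolding X_def by auto
    have "real (q div conductor q c) = real q / real (conductor q c)" using cp by (simp add: real_of_nat_div)
    thus "e c = ln (real q) - ln (real (conductor q c))" unfolding e_def using cp q by (simp add: ln_div)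
    show "conductor q c \<le> q" using cp q by (intro dvd_imp_le) auto
  qed
  show "\<exists>F \<subseteq> dirichlet_chars q.
              (\<forall>c. c \<in> F \<longleftrightarrow> (\<lambda>n. cnj (c n)) \<in> F) \<and>
              real (card F) \<ge> real (totient q) * (1 - 70 * (w q)\<^sup>2) \<and>
              (\<forall>c\<in>F. \<bar>ln (real (conductor q c)) - ln (real q)\<bar> \<le> 70 * ln (ln (real q)) / w q)"
  proof (intro exI[of _ F] conjI allI ballI)
    show "F \<subseteq> dirichlet_chars q" unfolding F_def X_def by auto
  next
    fix c :: "nat \<Rightarrow> complex"
    have "c \<in> X \<longleftrightarrow> (\<lambda>n. cnj (c n)) \<in> X"
      using conj_char[of c q] conj_char[of "\<lambda>n. cnj (c n)" q] conjconj[of c] unfolding X_def by auto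
    moreover have "e (\<lambda>n. cnj (c n)) = e c" unfolding e_def by (simp add: conj_conductor)
    ultimately show "c \<in> F \<longleftrightarrow> (\<lambda>n. cnj (c n)) \<in> F" unfolding F_def by auto
  next
    fix c assume "c \<in> F"
    hence c: "c \<in> X" "e c \<le> T" unfolding F_def by auto
    have cp: "conductor q c > 0" using conductor_props[OF q2] c unfolding X_def by auto
    have "ln (real (conductor q c)) \<le> ln (real q)" using condle[OF c(1)] cp by simp
    hence "\<bar>ln (real (conductor q c)) - ln (real q)\<bar> = e c" using lnq[OF c(1)] by simp
    thus "\<bar>ln (real (conductor q c)) - ln (real q)\<bar> \<le> 70 * ln (ln (real q)) / w q"
      using c(2) unfolding T_def L_def by simp
  next
    define Bad where "Bad = {c \<in> X. \<not> e c \<le> T}"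
    have XU: "X = F \<union> Bad" "F \<inter> Bad = {}" unfolding F_def Bad_def by auto
    have finFB: "finite F" "finite Bad" using finX unfolding F_def Bad_def by auto
    have cardX: "card X = card F + card Bad" using card_Un_disjoint[OF finFB XU(2)] XU(1) by simp
    have "real (card Bad) * T^2 = (\<Sum>c\<in>Bad. T^2)" by simp
    also have "\<dots> \<le> (\<Sum>c\<in>Bad. (e c)^2)"
    proof (intro sum_mono)
      fix c assume "c \<in> Bad"
      hence "T < e c" unfolding Bad_def by auto
      thus "T^2 \<le> (e c)^2" using T0 by (intro power_mono) auto
    qed
    also have "\<dots> \<le> (\<Sum>c\<in>X. (e c)^2)" using finX XU by (intro sum_mono2) auto
    also have "\<dots> \<le> real (totient q) * (311040 * L^2)"
      using main_count[OF q] unfolding e_def X_def L_def .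
    finally have bad: "real (card Bad) * T^2 \<le> real (totient q) * (311040 * L^2)" .
    have Tw: "T * w q = 70 * L" unfolding T_def using w0 by simp
    have TL: "4900 * L^2 = T^2 * (w q)^2"
      using arg_cong[OF Tw, of "\<lambda>x. x^2"] by (simp add: power_mult_distrib)
    have "(real (card Bad) * 4900) * L^2 = (real (card Bad) * T^2) * (w q)^2" using TL by (simp add: mult_ac)
    also have "\<dots> \<le> (real (totient q) * (311040 * L^2)) * (w q)^2"
      using bad by (intro mult_right_mono) auto
    also have "\<dots> = (real (totient q) * 311040 * (w q)^2) * L^2" by (simp add: mult_ac)
    finally have "(real (card Bad) * 4900) * L^2 \<le> (real (totient q) * 311040 * (w q)^2) * L^2" .
    hence "real (card Bad) * 4900 \<le> real (totient q) * 311040 * (w q)^2"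
      by (rule mult_right_le_imp_le) (use L0 in simp)
    moreover have "real (totient q) * 311040 * (w q)^2 \<le> 4900 * (real (totient q) * (70 * (w q)^2))"
    proof -
      have X: "real (totient q) * (w q)^2 \<ge> 0" by simp
      have "real (totient q) * 311040 * (w q)^2 = 311040 * (real (totient q) * (w q)^2)" by (simp add: mult_ac)
      also have "\<dots> \<le> 343000 * (real (totient q) * (w q)^2)" using X by (intro mult_right_mono) auto
      also have "\<dots> = 4900 * (real (totient q) * (70 * (w q)^2))" by (simp add: mult_ac)
      finally show ?thesis .
    qed
    ultimately have cb: "real (card Bad) \<le> real (totient q) * (70 * (w q)^2)" by linarith
    have "real (card F) = real (totient q) - real (card Bad)" using cardX cX by simp
    thus "real (totient q) * (1 - 70 * (w q)\<^sup>2) \<le> real (card F)" using cb by (simp add: algebra_simps)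
  qed
qed


end
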